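(* Let $p\ge 3$ be an integer and let $\lambda\ge 0$. For each $n\ge1$, let $\theta_0\in\mathbb S^{n-1}$, let $Z$ be a random $p$-tensor in $(\mathbb R^n)^{\otimes p}$ with i.i.d. $\mathcal N(0,1)$ entries, and set $Y=\lambda\sqrt n\,\theta_0^{\otimes p}+Z$. Let $\Pi$ be the uniform probability measure on $\mathbb S^{n-1}$ and let the posterior be $d\Pi(\theta\mid Y)=\mathcal Z_Y^{-1}\exp\big(\tfrac12\sqrt n\lambda\langle\theta^{\otimes p},Y\rangle\big)\,d\Pi(\theta)$. Then there exist $\lambda_0>0$ and a function $s(\lambda)\in[0,1)$ with $s(\lambda)\to1$ as $\lambda\to\infty$ such that for all $\lambda\ge\lambda_0$, \[\lim_{n\to\infty}\Pi(\mathcal T_{s(\lambda)}\mid Y)=1\quad\text{almost surely.}\]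
   Context: $\mathbb S^{n-1}=\{\theta\in\mathbb R^n:\|\theta\|_2=1\}$; $\mathcal Z_Y$ is the normalising constant. If $p$ is even, $\mathcal T_t=\{\theta\in\mathbb S^{n-1}:|\langle\theta,\theta_0\rangle|>t\}$; if $p$ is odd, $\mathcal T_t=\{\theta\in\mathbb S^{n-1}:\langle\theta,\theta_0\rangle>t\}$. *)

theory Defs
  imports "HOL-Probability.Probability"
begin

text \<open>Vectors in R^n are functions nat => real; only the coordinates i < n matter.
  Points of the measurable space are extensional functions on {..<n} (PiM convention).\<close>

definition sqnorm :: "nat \<Rightarrow> (nat \<Rightarrow> real) \<Rightarrow> real" where
  "sqnorm n x = (\<Sum>i<n. (x i)\<^sup>2)"

definition inner_n :: "nat \<Rightarrow> (nat \<Rightarrow> real) \<Rightarrow> (nat \<Rightarrow> real) \<Rightarrow> real" where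
  "inner_n n x y = (\<Sum>i<n. x i * y i)"

definition sphere_n :: "nat \<Rightarrow> (nat \<Rightarrow> real) set" where
  "sphere_n n = {x. x \<in> extensional {..<n} \<and> sqnorm n x = 1}"

definition normalize_n :: "nat \<Rightarrow> (nat \<Rightarrow> real) \<Rightarrow> (nat \<Rightarrow> real)" where
  "normalize_n n x = (\<lambda>i\<in>{..<n}. x i / sqrt (sqnorm n x))"

definition lebesgue_n :: "nat \<Rightarrow> (nat \<Rightarrow> real) measure" where
  "lebesgue_n n = PiM {..<n} (\<lambda>_. lborel)"

text \<open>Uniform (normalised surface) probability measure on S^{n-1}: the image of the
  uniform distribution on the closed unit ball under radial projection x \<mapsto> x/|x|
  (equivalently, Pi(A) = vol(cone over A in the ball) / vol(ball)).\<close>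
definition unif_sphere :: "nat \<Rightarrow> (nat \<Rightarrow> real) measure" where
  "unif_sphere n =
     distr (uniform_measure (lebesgue_n n) {x \<in> space (lebesgue_n n). sqnorm n x \<le> 1})
           (restrict_space (PiM {..<n} (\<lambda>_. borel)) (sphere_n n))
           (normalize_n n)"

definition tensor_idx :: "nat \<Rightarrow> nat \<Rightarrow> nat list set" where
  "tensor_idx p n = {xs. length xs = p \<and> set xs \<subseteq> {..<n}}"

definition tpow :: "nat \<Rightarrow> (nat \<Rightarrow> real) \<Rightarrow> nat list \<Rightarrow> real" where
  "tpow p \<theta> xs = (\<Prod>j<p. \<theta> (xs ! j))"

definition tensor_inner :: "nat \<Rightarrow> nat \<Rightarrow> (nat \<Rightarrow> real) \<Rightarrow> (nat list \<Rightarrow> real) \<Rightarrow> real" where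
  "tensor_inner p n \<theta> T = (\<Sum>xs\<in>tensor_idx p n. tpow p \<theta> xs * T xs)"

definition obs :: "nat \<Rightarrow> nat \<Rightarrow> real \<Rightarrow> (nat \<Rightarrow> real) \<Rightarrow> (nat list \<Rightarrow> real) \<Rightarrow> (nat list \<Rightarrow> real)" where
  "obs p n lam \<theta>0 Z = (\<lambda>xs. lam * sqrt (real n) * tpow p \<theta>0 xs + Z xs)"

definition posterior :: "nat \<Rightarrow> nat \<Rightarrow> real \<Rightarrow> (nat list \<Rightarrow> real) \<Rightarrow> (nat \<Rightarrow> real) set \<Rightarrow> real" where
  "posterior p n lam Y A =
     (let w = (\<lambda>\<theta>. exp (1/2 * sqrt (real n) * lam * tensor_inner p n \<theta> Y))
      in (\<integral>\<theta>. indicator A \<theta> * w \<theta> \<partial>unif_sphere n) / (\<integral>\<theta>. w \<theta> \<partial>unif_sphere n))"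

definition T_set :: "nat \<Rightarrow> nat \<Rightarrow> (nat \<Rightarrow> real) \<Rightarrow> real \<Rightarrow> (nat \<Rightarrow> real) set" where
  "T_set p n \<theta>0 t =
     (if even p then {\<theta> \<in> sphere_n n. \<bar>inner_n n \<theta> \<theta>0\<bar> > t}
      else {\<theta> \<in> sphere_n n. inner_n n \<theta> \<theta>0 > t})"

end

theory Submission
  imports Defs "HOL-Real_Asymp.Real_Asymp"
begin

lemma tensor_idx_0: "tensor_idx 0 n = {[]}"
  by (auto simp: tensor_idx_def)

lemma tensor_idx_Suc: "tensor_idx (Suc p) n = (\<lambda>(i,xs). i#xs) ` ({..<n} \<times> tensor_idx p n)"
proof (rule set_eqI)
  fix ys show "ys \<in> tensor_idx (Suc p) n \<longleftrightarrow> ys \<in> (\<lambda>(i,xs). i#xs) ` ({..<n} \<times> tensor_idx p n)"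
    by (cases ys) (auto simp: tensor_idx_def)
qed

lemma finite_tensor_idx[simp]: "finite (tensor_idx p n)"
  by (induction p) (auto simp: tensor_idx_0 tensor_idx_Suc)

lemma tensor_idx_lt: "xs \<in> tensor_idx p n \<Longrightarrow> j < p \<Longrightarrow> xs ! j < n"
  by (auto simp: tensor_idx_def dest!: nth_mem)

lemma sum_prod_tensor:
  "(\<Sum>xs\<in>tensor_idx p n. \<Prod>j<p. f j (xs ! j)) = (\<Prod>j<p. \<Sum>i<n. (f j i :: real))"
proof (induction p arbitrary: f)
  case 0
  then show ?case by (simp add: tensor_idx_0)
next
  case (Suc p)
  have inj: "inj_on (\<lambda>(i,xs). i#xs) ({..<n} \<times> tensor_idx p n)"
    by (auto simp: inj_on_def)
  have "(\<Sum>xs\<in>tensor_idx (Suc p) n. \<Prod>j<Suc p. f j (xs ! j))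
      = (\<Sum>(i,xs)\<in>{..<n} \<times> tensor_idx p n. \<Prod>j<Suc p. f j ((i#xs) ! j))"
    unfolding tensor_idx_Suc by (subst sum.reindex[OF inj]) (simp add: case_prod_unfold)
  also have "\<dots> = (\<Sum>(i,xs)\<in>{..<n} \<times> tensor_idx p n. f 0 i * (\<Prod>j<p. f (Suc j) (xs ! j)))"
    by (intro sum.cong refl) (auto simp: prod.lessThan_Suc_shift simp del: prod.lessThan_Suc)
  also have "\<dots> = (\<Sum>i<n. \<Sum>xs\<in>tensor_idx p n. f 0 i * (\<Prod>j<p. f (Suc j) (xs ! j)))"
    by (simp add: sum.cartesian_product)
  also have "\<dots> = (\<Sum>i<n. f 0 i) * (\<Prod>j<p. \<Sum>i<n. f (Suc j) i)"
    by (simp add: sum_distrib_left[symmetric] sum_distrib_right Suc.IH[of "\<lambda>j. f (Suc j)"])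
  also have "\<dots> = (\<Prod>j<Suc p. \<Sum>i<n. f j i)"
    by (simp add: prod.lessThan_Suc_shift del: prod.lessThan_Suc)
  finally show ?case .
qed

definition mlin :: "nat \<Rightarrow> nat \<Rightarrow> (nat list \<Rightarrow> real) \<Rightarrow> (nat \<Rightarrow> nat \<Rightarrow> real) \<Rightarrow> real" where
  "mlin p n T x = (\<Sum>xs\<in>tensor_idx p n. (\<Prod>j<p. x j (xs ! j)) * T xs)"

lemma tensor_inner_mlin: "tensor_inner p n \<theta> T = mlin p n T (\<lambda>_. \<theta>)"
  by (simp add: tensor_inner_def mlin_def tpow_def)

lemma tensor_inner_tpow: "tensor_inner p n \<theta> (tpow p \<theta>0) = (inner_n n \<theta> \<theta>0) ^ p"
proof -
  have "tensor_inner p n \<theta> (tpow p \<theta>0) = (\<Sum>xs\<in>tensor_idx p n. \<Prod>j<p. \<theta> (xs!j) * \<theta>0 (xs!j))"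
    by (simp add: tensor_inner_def tpow_def prod.distrib)
  also have "\<dots> = (\<Prod>j<p. \<Sum>i<n. \<theta> i * \<theta>0 i)" by (rule sum_prod_tensor)
  finally show ?thesis by (simp add: inner_n_def)
qed

lemma tensor_inner_obs:
  "tensor_inner p n \<theta> (obs p n lam \<theta>0 T) = lam * sqrt (real n) * (inner_n n \<theta> \<theta>0) ^ p + tensor_inner p n \<theta> T"
proof -
  have "tensor_inner p n \<theta> (obs p n lam \<theta>0 T) = lam * sqrt (real n) * tensor_inner p n \<theta> (tpow p \<theta>0) + tensor_inner p n \<theta> T"
    by (simp add: tensor_inner_def obs_def algebra_simps sum.distrib sum_distrib_left)
  then show ?thesis by (simp add: tensor_inner_tpow)
qed

lemma sum_sq_coef:
  "(\<Sum>xs\<in>tensor_idx p n. (\<Prod>j<p. x j (xs ! j))^2) = (\<Prod>j<p. sqnorm n (x j))"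
  using sum_prod_tensor[of "\<lambda>j i. (x j i)^2" p n] by (simp add: prod_power_distrib sqnorm_def)

lemma psf_lborel: "product_sigma_finite (\<lambda>_::nat. lborel)"
  by (simp add: product_sigma_finite_def lborel.sigma_finite_measure_axioms)

lemma sets_lebesgue_n: "sets (lebesgue_n n) = sets (PiM {..<n} (\<lambda>_. borel))"
  unfolding lebesgue_n_def by (rule sets_PiM_cong) auto

lemma space_lebesgue_n: "space (lebesgue_n n) = PiE {..<n} (\<lambda>_. UNIV)"
  unfolding lebesgue_n_def by (simp add: space_PiM)

lemma sqnorm_borel[measurable]: "sqnorm n \<in> borel_measurable (PiM {..<n} (\<lambda>_. borel))"
  unfolding sqnorm_def[abs_def] by measurable

lemma sqnorm_borel_leb[measurable]: "sqnorm n \<in> borel_measurable (lebesgue_n n)"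
  using sqnorm_borel measurable_cong_sets[OF sets_lebesgue_n refl] by blast

definition Bl :: "nat \<Rightarrow> (nat \<Rightarrow> real) set" where
  "Bl n = {x \<in> space (lebesgue_n n). sqnorm n x \<le> 1}"

lemma Bl_sets[measurable]: "Bl n \<in> sets (lebesgue_n n)"
  unfolding Bl_def by measurable

definition e0 :: "nat \<Rightarrow> nat \<Rightarrow> real" where
  "e0 n = (\<lambda>i\<in>{..<n}. if i = 0 then 1 else 0)"

definition gnorm :: "nat \<Rightarrow> (nat \<Rightarrow> real) \<Rightarrow> (nat \<Rightarrow> real)" where
  "gnorm n x = (if sqnorm n x = 0 then e0 n else normalize_n n x)"

definition Nsp :: "nat \<Rightarrow> (nat \<Rightarrow> real) measure" where
  "Nsp n = restrict_space (PiM {..<n} (\<lambda>_. borel)) (sphere_n n)"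

lemma sqnorm_nonneg: "0 \<le> sqnorm n x"
  by (simp add: sqnorm_def sum_nonneg)

lemma sqnorm_e0: "n \<ge> 1 \<Longrightarrow> sqnorm n (e0 n) = 1"
proof -
  assume n: "n \<ge> 1"
  have "sqnorm n (e0 n) = (\<Sum>i<n. if i = 0 then 1 else 0)"
    unfolding sqnorm_def e0_def by (intro sum.cong) auto
  also have "\<dots> = 1" using n by simp
  finally show ?thesis .
qed

lemma sqnorm_normalize: "sqnorm n x \<noteq> 0 \<Longrightarrow> sqnorm n (normalize_n n x) = 1"
proof -
  assume h: "sqnorm n x \<noteq> 0"
  have pos: "0 < sqnorm n x" using h sqnorm_nonneg[of n x] by simp
  have "sqnorm n (normalize_n n x) = (\<Sum>i<n. (x i / sqrt (sqnorm n x))^2)"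
    unfolding normalize_n_def by (subst (1) sqnorm_def) (intro sum.cong; auto)
  also have "\<dots> = (\<Sum>i<n. (x i)^2 / sqnorm n x)"
    using pos by (simp add: power_divide)
  also have "\<dots> = 1" using h by (simp add: sum_divide_distrib[symmetric] sqnorm_def)
  finally show ?thesis .
qed

lemma sphere_subset: "sphere_n n \<subseteq> space (PiM {..<n} (\<lambda>_. borel))"
  by (auto simp: sphere_n_def space_PiM PiE_def)

lemma space_Nsp: "space (Nsp n) = sphere_n n"
  using sphere_subset[of n] by (auto simp: Nsp_def space_restrict_space)

lemma gnorm_sphere: "n \<ge> 1 \<Longrightarrow> gnorm n x \<in> sphere_n n"
  using sqnorm_e0[of n] sqnorm_normalize[of n x]
  by (auto simp: gnorm_def sphere_n_def e0_def normalize_n_def)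

lemma gnorm_meas: "n \<ge> 1 \<Longrightarrow> gnorm n \<in> lebesgue_n n \<rightarrow>\<^sub>M Nsp n"
  unfolding Nsp_def
proof (rule measurable_restrict_space2)
  assume n: "n \<ge> 1"
  show "gnorm n \<in> space (lebesgue_n n) \<rightarrow> sphere_n n" using gnorm_sphere[OF n] by auto
  have "gnorm n \<in> PiM {..<n} (\<lambda>_. borel) \<rightarrow>\<^sub>M PiM {..<n} (\<lambda>_. borel)"
  proof (rule measurable_PiM_single')
    fix i assume i: "i \<in> {..<n}"
    have "(\<lambda>x. gnorm n x i) = (\<lambda>x. if sqnorm n x = 0 then e0 n i else x i / sqrt (sqnorm n x))"
      using i by (auto simp: gnorm_def normalize_n_def fun_eq_iff)
    also have "\<dots> \<in> borel_measurable (PiM {..<n} (\<lambda>_. borel))"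
      using i by measurable
    finally show "(\<lambda>x. gnorm n x i) \<in> borel_measurable (PiM {..<n} (\<lambda>_. borel))" .
  next
    show "gnorm n \<in> space (PiM {..<n} (\<lambda>_. borel)) \<rightarrow> (\<Pi>\<^sub>E i\<in>{..<n}. space borel)"
      using gnorm_sphere[OF n] sphere_subset[of n] by (auto simp: space_PiM)
  qed
  then show "gnorm n \<in> lebesgue_n n \<rightarrow>\<^sub>M PiM {..<n} (\<lambda>_. borel)"
    using measurable_cong_sets[OF sets_lebesgue_n refl] by blast
qed

definition nrm :: "nat \<Rightarrow> (nat \<Rightarrow> real) \<Rightarrow> real" where
  "nrm n f = L2_set f {..<n}"

lemma nrm_nonneg: "0 \<le> nrm n f" by (simp add: nrm_def)

lemma nrm_sqrt: "nrm n f = sqrt (sqnorm n f)"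
  by (simp add: nrm_def L2_set_def sqnorm_def)

lemma nrm_sq: "(nrm n f)^2 = sqnorm n f"
  by (simp add: nrm_sqrt sqnorm_nonneg)

lemma nrm_add: "nrm n (\<lambda>i. f i + g i) \<le> nrm n f + nrm n g"
  unfolding nrm_def by (rule L2_set_triangle_ineq)

lemma nrm_scale: "nrm n (\<lambda>i. c * f i) = \<bar>c\<bar> * nrm n f"
  unfolding nrm_def L2_set_def
  by (simp add: power_mult_distrib real_sqrt_mult flip: sum_distrib_left)

lemma nrm_cong: "(\<And>i. i < n \<Longrightarrow> f i = g i) \<Longrightarrow> nrm n f = nrm n g"
  unfolding nrm_def by (rule L2_set_cong) auto

lemma sqnorm_cong: "(\<And>i. i < n \<Longrightarrow> f i = g i) \<Longrightarrow> sqnorm n f = sqnorm n g"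
  unfolding sqnorm_def by (rule sum.cong) auto

lemma nrm_le_box:
  assumes "\<And>i. i < n \<Longrightarrow> \<bar>f i\<bar> \<le> h"
  shows "nrm n f \<le> sqrt (real n) * h"
proof -
  have h: "0 \<le> h" if "n > 0" using assms[of 0] that by auto
  have "sqnorm n f \<le> (\<Sum>i<n. h^2)"
    unfolding sqnorm_def using assms by (intro sum_mono) (metis abs_ge_zero power2_abs power_mono lessThan_iff)
  then have "sqnorm n f \<le> real n * h^2" by simp
  then have "nrm n f \<le> sqrt (real n * h^2)" by (simp add: nrm_sqrt)
  also have "\<dots> = sqrt (real n) * h" 
    using h by (cases "n = 0") (auto simp: real_sqrt_mult)
  finally show ?thesis .
qed

definition sbox :: "nat \<Rightarrow> (nat \<Rightarrow> real) \<Rightarrow> real \<Rightarrow> (nat \<Rightarrow> real) set" where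
  "sbox n \<theta> \<delta> = PiE {..<n} (\<lambda>i. {\<theta> i / 2 - \<delta> / (8 * sqrt (real n)) .. \<theta> i / 2 + \<delta> / (8 * sqrt (real n))})"

lemma sbox_props:
  assumes n: "n \<ge> 1" and th: "sqnorm n \<theta> = 1" and d: "0 < \<delta>" "\<delta> \<le> 1"
    and x: "x \<in> sbox n \<theta> \<delta>"
  shows "x \<in> Bl n" "sqnorm n x \<noteq> 0" "sqnorm n (\<lambda>i. gnorm n x i - \<theta> i) \<le> \<delta>^2"
proof -
  define h where "h = \<delta> / (8 * sqrt (real n))"
  define dd where "dd = (\<lambda>i. x i - \<theta> i / 2)"
  have sn: "sqrt (real n) > 0" using n by simp
  have "\<bar>dd i\<bar> \<le> h" if "i < n" for i
  proof -
    from x that have "\<theta> i/2 - h \<le> x i \<and> x i \<le> \<theta> i/2 + h"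
      unfolding sbox_def h_def by (auto simp: PiE_iff)
    then show ?thesis by (simp add: dd_def abs_le_iff)
  qed
  then have "nrm n dd \<le> sqrt (real n) * h" by (rule nrm_le_box)
  also have "\<dots> = \<delta> / 8" using sn by (simp add: h_def)
  finally have ndd: "nrm n dd \<le> \<delta> / 8" .
  have nth: "nrm n \<theta> = 1" using th by (simp add: nrm_sqrt)
  have nth2: "nrm n (\<lambda>i. (1/2) * \<theta> i) = 1/2" using nrm_scale[of n "1/2" \<theta>] nth by simp
  have "nrm n x = nrm n (\<lambda>i. dd i + (1/2) * \<theta> i)" by (rule nrm_cong) (simp add: dd_def)
  also have "\<dots> \<le> nrm n dd + 1/2" using nrm_add[of n dd "\<lambda>i. (1/2) * \<theta> i"] nth2 by simp
  finally have nx1: "nrm n x \<le> nrm n dd + 1/2" .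
  have "nrm n (\<lambda>i. (1/2) * \<theta> i) = nrm n (\<lambda>i. x i + (-1) * dd i)" by (rule nrm_cong) (simp add: dd_def)
  then have "1/2 = nrm n (\<lambda>i. x i + (-1) * dd i)" using nth2 by simp
  also have "\<dots> \<le> nrm n x + nrm n dd" using nrm_add[of n x "\<lambda>i. (-1) * dd i"] nrm_scale[of n "-1" dd] by simp
  finally have nx2: "1/2 \<le> nrm n x + nrm n dd" .
  have nxpos: "nrm n x \<ge> 3/8" using nx2 ndd d by simp
  have "sqnorm n x = (nrm n x)^2" by (simp add: nrm_sq)
  also have "\<dots> \<le> 1"
    using nx1 ndd d nrm_nonneg[of n x] by (simp add: power_le_one)
  finally have "sqnorm n x \<le> 1" .
  moreover have "x \<in> space (lebesgue_n n)"
    using x by (auto simp: sbox_def space_lebesgue_n PiE_iff)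
  ultimately show "x \<in> Bl n" by (simp add: Bl_def)
  show sx: "sqnorm n x \<noteq> 0" using nxpos by (auto simp: nrm_sqrt)
  have gx: "gnorm n x i = x i / nrm n x" if "i < n" for i
    using sx that by (simp add: gnorm_def normalize_n_def nrm_sqrt)
  have "nrm n (\<lambda>i. gnorm n x i - \<theta> i) = nrm n (\<lambda>i. (1 / nrm n x) * (dd i + (1/2 - nrm n x) * \<theta> i))"
    using nxpos by (intro nrm_cong) (simp add: gx dd_def field_simps)
  also have "\<dots> = (1 / nrm n x) * nrm n (\<lambda>i. dd i + (1/2 - nrm n x) * \<theta> i)"
    by (subst nrm_scale) (use nxpos in simp)
  also have "\<dots> \<le> (1 / nrm n x) * (nrm n dd + \<bar>1/2 - nrm n x\<bar>)"
    using nxpos nrm_add[of n dd "\<lambda>i. (1/2 - nrm n x) * \<theta> i"] 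
    by (intro mult_left_mono) (simp_all add: nrm_scale nth)
  also have "\<dots> \<le> (8/3) * (\<delta>/8 + \<delta>/8)"
  proof (rule mult_mono)
    show "1 / nrm n x \<le> 8/3" using nxpos by (simp add: divide_le_eq)
    show "nrm n dd + \<bar>1 / 2 - nrm n x\<bar> \<le> \<delta> / 8 + \<delta> / 8"
    proof -
      have "\<bar>1/2 - nrm n x\<bar> \<le> nrm n dd" unfolding abs_le_iff using nx1 nx2 by linarith
      then show ?thesis using ndd by linarith
    qed
  qed (use d nrm_nonneg in auto)
  finally have "nrm n (\<lambda>i. gnorm n x i - \<theta> i) \<le> 2 * \<delta> / 3" by simp
  then have "(nrm n (\<lambda>i. gnorm n x i - \<theta> i))^2 \<le> (2 * \<delta> / 3)^2"
    by (intro power_mono) (simp_all add: nrm_nonneg)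
  also have "\<dots> \<le> \<delta>^2" using d by (simp add: power_divide power_mult_distrib)
  finally show "sqnorm n (\<lambda>i. gnorm n x i - \<theta> i) \<le> \<delta>^2" by (simp add: nrm_sq)
qed

lemma box_sets[measurable]: "sbox n \<theta> \<delta> \<in> sets (lebesgue_n n)"
  unfolding sbox_def lebesgue_n_def by (rule sets_PiM_I_finite) auto

lemma emeasure_box:
  assumes n: "n \<ge> 1" and d: "\<delta> > 0"
  shows "emeasure (lebesgue_n n) (sbox n \<theta> \<delta>) = ennreal ((\<delta> / (4 * sqrt (real n)))^n)"
proof -
  have sn: "sqrt (real n) > 0" using n by simp
  have "emeasure (lebesgue_n n) (sbox n \<theta> \<delta>) =
     (\<Prod>i<n. emeasure lborel {\<theta> i / 2 - \<delta> / (8 * sqrt (real n)) .. \<theta> i / 2 + \<delta> / (8 * sqrt (real n))})"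
    unfolding sbox_def lebesgue_n_def
    by (rule product_sigma_finite.emeasure_PiM[OF psf_lborel]) auto
  also have "\<dots> = (\<Prod>i<n. ennreal (\<delta> / (4 * sqrt (real n))))"
    using sn d by (intro prod.cong refl) (simp add: field_simps)
  also have "\<dots> = ennreal ((\<delta> / (4 * sqrt (real n)))^n)"
    using sn d by (simp add: prod_ennreal ennreal_power)
  finally show ?thesis .
qed

lemma gauss_1d:
  assumes n: "n \<ge> 1"
  shows "(\<integral>\<^sup>+ y. ennreal (exp (- (real n / 2) * y^2)) \<partial>lborel) = ennreal (sqrt (2 * pi / real n))"
proof -
  have eq: "exp (- (real n / 2) * y^2) = sqrt (2 * pi / real n) * normal_density 0 (1 / sqrt (real n)) y" for y
    using n by (simp add: normal_density_def power_divide real_sqrt_divide field_simps)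
  have "(\<integral>\<^sup>+ y. ennreal (exp (- (real n / 2) * y^2)) \<partial>lborel)
      = (\<integral>\<^sup>+ y. ennreal (sqrt (2 * pi / real n)) * ennreal (normal_density 0 (1 / sqrt (real n)) y) \<partial>lborel)"
    by (rule nn_integral_cong, subst eq, rule ennreal_mult) auto
  also have "\<dots> = ennreal (sqrt (2 * pi / real n)) * (\<integral>\<^sup>+ y. ennreal (normal_density 0 (1 / sqrt (real n)) y) \<partial>lborel)"
    by (rule nn_integral_cmult) simp
  also have "(\<integral>\<^sup>+ y. ennreal (normal_density 0 (1 / sqrt (real n)) y) \<partial>lborel) = 1"
    using integrable_normal_density[of "1 / sqrt (real n)" 0] integral_normal_density[of "1 / sqrt (real n)" 0] n
    by (subst nn_integral_eq_integral) auto
  finally show ?thesis by simp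
qed

lemma vol_Bl_upper:
  assumes n: "n \<ge> 1"
  shows "emeasure (lebesgue_n n) (Bl n) \<le> ennreal ((sqrt (2 * pi * exp 1 / real n))^n)"
proof -
  let ?L = "lebesgue_n n"
  have "emeasure ?L (Bl n) = (\<integral>\<^sup>+ x. indicator (Bl n) x \<partial>?L)" by simp
  also have "\<dots> \<le> (\<integral>\<^sup>+ x. ennreal (exp (real n / 2)) * (\<Prod>i<n. ennreal (exp (- (real n / 2) * (x i)^2))) \<partial>?L)"
  proof (rule nn_integral_mono)
    fix x assume "x \<in> space ?L"
    have "(\<Prod>i<n. ennreal (exp (- (real n / 2) * (x i)^2))) = ennreal (\<Prod>i<n. exp (- (real n / 2) * (x i)^2))"
      by (simp add: prod_ennreal)
    also have "(\<Prod>i<n. exp (- (real n / 2) * (x i)^2)) = exp (- (real n / 2) * sqnorm n x)"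
      by (simp add: exp_sum[symmetric] sqnorm_def sum_distrib_left)
    finally have pe: "(\<Prod>i<n. ennreal (exp (- (real n / 2) * (x i)^2))) = ennreal (exp (- (real n / 2) * sqnorm n x))" .
    show "indicator (Bl n) x \<le> ennreal (exp (real n / 2)) * (\<Prod>i<n. ennreal (exp (- (real n / 2) * (x i)^2)))"
    proof (cases "x \<in> Bl n")
      case True
      then have "sqnorm n x \<le> 1" by (simp add: Bl_def)
      then have "real n / 2 - real n / 2 * sqnorm n x \<ge> 0"
        by (simp add: mult_left_le)
      then have "1 \<le> exp (real n / 2) * exp (- (real n / 2) * sqnorm n x)"
        by (simp add: exp_add[symmetric])
      then have "ennreal 1 \<le> ennreal (exp (real n / 2) * exp (- (real n / 2) * sqnorm n x))"
        by (rule ennreal_leI)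
      also have "\<dots> = ennreal (exp (real n / 2)) * ennreal (exp (- (real n / 2) * sqnorm n x))"
        by (rule ennreal_mult) auto
      finally show ?thesis using True by (simp only: pe) simp
    qed simp
  qed
  also have "\<dots> = ennreal (exp (real n / 2)) * (\<integral>\<^sup>+ x. (\<Prod>i<n. ennreal (exp (- (real n / 2) * (x i)^2))) \<partial>?L)"
    by (rule nn_integral_cmult) (simp add: lebesgue_n_def)
  also have "(\<integral>\<^sup>+ x. (\<Prod>i<n. ennreal (exp (- (real n / 2) * (x i)^2))) \<partial>?L)
      = (\<Prod>i<n. \<integral>\<^sup>+ y. ennreal (exp (- (real n / 2) * y^2)) \<partial>lborel)"
    unfolding lebesgue_n_def
    by (rule product_sigma_finite.product_nn_integral_prod[OF psf_lborel, where f="\<lambda>i y. ennreal (exp (- (real n / 2) * y^2))"]) auto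
  also have "\<dots> = ennreal ((sqrt (2 * pi / real n))^n)"
    by (subst gauss_1d[OF n]) (simp add: ennreal_power)
  also have "ennreal (exp (real n / 2)) * ennreal ((sqrt (2 * pi / real n))^n) = ennreal ((sqrt (2 * pi * exp 1 / real n))^n)"
  proof -
    have se: "sqrt (exp 1) = exp (1/2)"
      by (rule real_sqrt_unique) (simp_all add: exp_of_nat_mult[symmetric, of 2] power2_eq_square exp_add[symmetric])
    have "exp (real n / 2) = (sqrt (exp 1))^n"
      unfolding se by (simp add: exp_of_nat_mult[symmetric])
    then show ?thesis
      by (simp add: ennreal_mult[symmetric] power_mult_distrib[symmetric] real_sqrt_mult[symmetric] mult.commute mult.left_commute)
  qed
  finally show ?thesis .
qed

lemma vol_Bl_fin: "n \<ge> 1 \<Longrightarrow> emeasure (lebesgue_n n) (Bl n) < \<infinity>"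
  by (rule le_less_trans[OF vol_Bl_upper]) simp_all

lemma e0_sphere: "n \<ge> 1 \<Longrightarrow> sqnorm n (e0 n) = 1" by (rule sqnorm_e0)

lemma vol_Bl_pos: "n \<ge> 1 \<Longrightarrow> emeasure (lebesgue_n n) (Bl n) > 0"
proof -
  assume n: "n \<ge> 1"
  have "sbox n (e0 n) 1 \<subseteq> Bl n"
  proof
    fix x assume "x \<in> sbox n (e0 n) 1"
    then show "x \<in> Bl n" using sbox_props(1)[OF n sqnorm_e0[OF n], of 1 x] by simp
  qed
  then have "emeasure (lebesgue_n n) (sbox n (e0 n) 1) \<le> emeasure (lebesgue_n n) (Bl n)"
    by (intro emeasure_mono) auto
  moreover have "emeasure (lebesgue_n n) (sbox n (e0 n) 1) > 0"
    using n by (simp add: emeasure_box)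
  ultimately show ?thesis by simp
qed

lemma zero_null: "n \<ge> 1 \<Longrightarrow> {x \<in> space (lebesgue_n n). sqnorm n x = 0} \<in> null_sets (lebesgue_n n)"
proof -
  assume n: "n \<ge> 1"
  have eq: "{x \<in> space (lebesgue_n n). sqnorm n x = 0} = PiE {..<n} (\<lambda>_. {0})"
  proof (rule set_eqI)
    fix x
    have "sqnorm n x = 0 \<longleftrightarrow> (\<forall>i<n. x i = 0)"
      unfolding sqnorm_def by (subst sum_nonneg_eq_0_iff) auto
    then show "x \<in> {x \<in> space (lebesgue_n n). sqnorm n x = 0} \<longleftrightarrow> x \<in> PiE {..<n} (\<lambda>_. {0})"
      by (auto simp: space_lebesgue_n PiE_def Pi_def extensional_def)
  qed
  have "emeasure (lebesgue_n n) (PiE {..<n} (\<lambda>_. {0})) = (\<Prod>i<n. emeasure lborel {0::real})"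
    unfolding lebesgue_n_def by (rule product_sigma_finite.emeasure_PiM[OF psf_lborel]) auto
  also have "\<dots> = 0" using n by simp
  finally have e: "emeasure (lebesgue_n n) (PiE {..<n} (\<lambda>_. {0})) = 0" .
  have m: "PiE {..<n} (\<lambda>_. {0::real}) \<in> sets (lebesgue_n n)"
    unfolding lebesgue_n_def by (rule sets_PiM_I_finite) auto
  show ?thesis unfolding eq using e m by (simp add: null_sets_def)
qed

lemma unif_sphere_eq:
  assumes n: "n \<ge> 1"
  shows "unif_sphere n = distr (uniform_measure (lebesgue_n n) (Bl n)) (Nsp n) (gnorm n)"
proof -
  let ?U = "uniform_measure (lebesgue_n n) (Bl n)"
  let ?Z = "{x \<in> space (lebesgue_n n). sqnorm n x = 0}"
  have gm: "gnorm n \<in> ?U \<rightarrow>\<^sub>M Nsp n"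
    using gnorm_meas[OF n] measurable_cong_sets[OF sets_uniform_measure refl] by blast
  have Znull: "?Z \<in> null_sets ?U"
  proof -
    have Zs: "?Z \<in> sets (lebesgue_n n)" by measurable
    have "emeasure ?U ?Z = emeasure (lebesgue_n n) (Bl n \<inter> ?Z) / emeasure (lebesgue_n n) (Bl n)"
      by (rule emeasure_uniform_measure) (auto simp: Zs)
    also have "emeasure (lebesgue_n n) (Bl n \<inter> ?Z) = 0"
      using zero_null[OF n] by (rule null_sets_subset[THEN null_setsD1]) auto
    finally show ?thesis using Zs by (simp add: null_sets_def)
  qed
  show ?thesis
    unfolding unif_sphere_def distr_def Bl_def[symmetric] Nsp_def[symmetric]
  proof (rule measure_of_eq)
    show "sets (Nsp n) \<subseteq> Pow (space (Nsp n))" by (rule sets.space_closed)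
    fix a assume "a \<in> sigma_sets (space (Nsp n)) (sets (Nsp n))"
    then have a: "a \<in> sets (Nsp n)" by (simp add: sets.sigma_sets_eq)
    have asub: "a \<subseteq> sphere_n n" using sets.sets_into_space[OF a] by (simp add: space_Nsp)
    have pre: "gnorm n -` a \<inter> space ?U \<in> sets ?U" using gm a by (rule measurable_sets)
    have "normalize_n n -` a \<inter> space ?U = (gnorm n -` a \<inter> space ?U) - ?Z"
    proof (rule set_eqI)
      fix x
      show "x \<in> normalize_n n -` a \<inter> space ?U \<longleftrightarrow> x \<in> (gnorm n -` a \<inter> space ?U) - ?Z"
      proof (cases "sqnorm n x = 0")
        case True
        have "sqnorm n (normalize_n n x) = 0"
          using True unfolding sqnorm_def normalize_n_def by (subst sum.cong[OF refl, where h="\<lambda>_. 0"]) auto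
        then have "normalize_n n x \<notin> a" using asub by (auto simp: sphere_n_def)
        then show ?thesis using True by auto
      next
        case False
        then show ?thesis by (auto simp: gnorm_def)
      qed
    qed
    then show "emeasure ?U (normalize_n n -` a \<inter> space ?U) = emeasure ?U (gnorm n -` a \<inter> space ?U)"
      using emeasure_Diff_null_set[OF Znull pre] by simp
  qed
qed

lemma sets_unif: "sets (unif_sphere n) = sets (Nsp n)"
  by (simp add: unif_sphere_def Nsp_def)

lemma space_unif: "space (unif_sphere n) = sphere_n n"
  using space_Nsp[of n] by (simp add: unif_sphere_def Nsp_def)

lemma emeasure_unif:
  assumes n: "n \<ge> 1" and A: "A \<in> sets (Nsp n)"
  shows "emeasure (unif_sphere n) A = emeasure (lebesgue_n n) (gnorm n -` A \<inter> Bl n) / emeasure (lebesgue_n n) (Bl n)"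
proof -
  let ?U = "uniform_measure (lebesgue_n n) (Bl n)"
  have gm: "gnorm n \<in> ?U \<rightarrow>\<^sub>M Nsp n"
    using gnorm_meas[OF n] measurable_cong_sets[OF sets_uniform_measure refl] by blast
  have pre: "gnorm n -` A \<inter> space (lebesgue_n n) \<in> sets (lebesgue_n n)"
    using measurable_sets[OF gnorm_meas[OF n] A] .
  have "emeasure (unif_sphere n) A = emeasure ?U (gnorm n -` A \<inter> space ?U)"
    unfolding unif_sphere_eq[OF n] by (rule emeasure_distr[OF gm A])
  also have "\<dots> = emeasure (lebesgue_n n) (Bl n \<inter> (gnorm n -` A \<inter> space (lebesgue_n n))) / emeasure (lebesgue_n n) (Bl n)"
    by (simp add: emeasure_uniform_measure pre)
  also have "Bl n \<inter> (gnorm n -` A \<inter> space (lebesgue_n n)) = gnorm n -` A \<inter> Bl n"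
    by (auto simp: Bl_def)
  finally show ?thesis .
qed

lemma prob_unif: "n \<ge> 1 \<Longrightarrow> prob_space (unif_sphere n)"
proof
  assume n: "n \<ge> 1"
  have sp: "sphere_n n \<in> sets (Nsp n)" using sets.top[of "Nsp n"] by (simp add: space_Nsp)
  have "gnorm n -` sphere_n n \<inter> Bl n = Bl n" using gnorm_sphere[OF n] by auto
  then show "emeasure (unif_sphere n) (space (unif_sphere n)) = 1"
    using vol_Bl_pos[OF n] vol_Bl_fin[OF n]
    by (simp add: space_unif emeasure_unif[OF n sp] ennreal_divide_self)
qed

lemma comp_meas_Nsp: "(\<lambda>u. u i) \<in> borel_measurable (Nsp n)"
proof (cases "i < n")
  case True
  then show ?thesis unfolding Nsp_def
    by (intro measurable_restrict_space1) simp
next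
  case False
  have "(\<lambda>u. u i) \<in> borel_measurable (Nsp n) \<longleftrightarrow> (\<lambda>u. undefined :: real) \<in> borel_measurable (Nsp n)"
    by (rule measurable_cong) (use False in \<open>auto simp: space_Nsp sphere_n_def extensional_def\<close>)
  then show ?thesis by simp
qed

lemma comp_meas_unif: "(\<lambda>u. u i) \<in> borel_measurable (unif_sphere n)"
  using comp_meas_Nsp measurable_cong_sets[OF sets_unif refl] by blast

definition cap :: "nat \<Rightarrow> (nat \<Rightarrow> real) \<Rightarrow> real \<Rightarrow> (nat \<Rightarrow> real) set" where
  "cap n \<theta> \<delta> = {u \<in> sphere_n n. sqnorm n (\<lambda>i. u i - \<theta> i) \<le> \<delta>^2}"

lemma cap_sets[measurable]: "cap n \<theta> \<delta> \<in> sets (unif_sphere n)"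
proof -
  note comp_meas_unif[measurable]
  have "{u \<in> space (unif_sphere n). sqnorm n (\<lambda>i. u i - \<theta> i) \<le> \<delta>^2} \<in> sets (unif_sphere n)"
    unfolding sqnorm_def by measurable
  then show ?thesis by (simp add: cap_def space_unif)
qed

lemma cap_lower:
  assumes n: "n \<ge> 1" and th: "sqnorm n \<theta> = 1" and d: "0 < \<delta>" "\<delta> \<le> 1"
  shows "emeasure (unif_sphere n) (cap n \<theta> \<delta>) \<ge> ennreal ((\<delta> / 20)^n)"
proof -
  let ?L = "lebesgue_n n"
  have capN: "cap n \<theta> \<delta> \<in> sets (Nsp n)" using cap_sets sets_unif by blast
  obtain V where V: "emeasure ?L (Bl n) = ennreal V" "V > 0"
    using vol_Bl_pos[OF n] vol_Bl_fin[OF n]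
    by (metis ennreal_cases ennreal_less_zero_iff infinity_ennreal_def less_irrefl)
  have Vle: "V \<le> (sqrt (2 * pi * exp 1 / real n))^n"
    using vol_Bl_upper[OF n] V by (simp add: ennreal_le_iff2)
  have sub: "sbox n \<theta> \<delta> \<subseteq> gnorm n -` cap n \<theta> \<delta> \<inter> Bl n"
    using sbox_props[OF n th d] gnorm_sphere[OF n] by (auto simp: cap_def)
  have "ennreal ((\<delta> / (4 * sqrt (real n)))^n) \<le> emeasure ?L (gnorm n -` cap n \<theta> \<delta> \<inter> Bl n)"
  proof -
    have "gnorm n -` cap n \<theta> \<delta> \<inter> Bl n = (gnorm n -` cap n \<theta> \<delta> \<inter> space ?L) \<inter> Bl n"
      by (auto simp: Bl_def)
    then have "gnorm n -` cap n \<theta> \<delta> \<inter> Bl n \<in> sets ?L"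
      using measurable_sets[OF gnorm_meas[OF n] capN] by auto
    then have "emeasure ?L (sbox n \<theta> \<delta>) \<le> emeasure ?L (gnorm n -` cap n \<theta> \<delta> \<inter> Bl n)"
      by (rule emeasure_mono[OF sub])
    then show ?thesis by (simp only: emeasure_box[OF n d(1), of \<theta>])
  qed
  then have "ennreal ((\<delta> / (4 * sqrt (real n)))^n) / ennreal V \<le> emeasure (unif_sphere n) (cap n \<theta> \<delta>)"
    unfolding emeasure_unif[OF n capN] V(1) by (rule divide_right_mono_ennreal)
  moreover have "(\<delta> / 20)^n \<le> (\<delta> / (4 * sqrt (real n)))^n / V"
  proof -
    have s1: "sqrt (2 * pi * exp 1) \<le> 5"
    proof -
      have "2 * pi * exp 1 \<le> 2 * 4 * 3" 
        using pi_less_4 exp_le by (intro mult_mono) auto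
      then have "sqrt (2 * pi * exp 1) \<le> sqrt 25" by (intro real_sqrt_le_mono) simp
      also have "sqrt 25 = (5::real)" by (simp add: real_sqrt_unique)
      finally show ?thesis .
    qed
    have "(\<delta> / 20)^n * V \<le> (\<delta> / 20)^n * (sqrt (2 * pi * exp 1 / real n))^n"
      using Vle d by (intro mult_left_mono) auto
    also have "\<dots> = (\<delta> * sqrt (2 * pi * exp 1) / (20 * sqrt (real n)))^n"
      by (simp add: power_mult_distrib[symmetric] real_sqrt_divide)
    also have "\<dots> \<le> (\<delta> / (4 * sqrt (real n)))^n"
    proof (rule power_mono)
      have "\<delta> * sqrt (2 * pi * exp 1) \<le> \<delta> * 5" using s1 d by simp
      then show "\<delta> * sqrt (2 * pi * exp 1) / (20 * sqrt (real n)) \<le> \<delta> / (4 * sqrt (real n))"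
        using n by (simp add: divide_simps)
      show "0 \<le> \<delta> * sqrt (2 * pi * exp 1) / (20 * sqrt (real n))" using d by simp
    qed
    finally show ?thesis using V(2) by (simp add: le_divide_eq)
  qed
  ultimately show ?thesis
  proof -
    assume a1: "ennreal ((\<delta> / (4 * sqrt (real n)))^n) / ennreal V \<le> emeasure (unif_sphere n) (cap n \<theta> \<delta>)"
    assume a2: "(\<delta> / 20)^n \<le> (\<delta> / (4 * sqrt (real n)))^n / V"
    have "ennreal ((\<delta> / (4 * sqrt (real n)))^n) / ennreal V = ennreal ((\<delta> / (4 * sqrt (real n)))^n / V)"
      using V(2) d by (intro divide_ennreal) auto
    then show ?thesis using a1 ennreal_leI[OF a2] by simp
  qed
qed

lemma mgf_1d: "(\<integral>\<^sup>+ x. ennreal (std_normal_density x) * ennreal (exp (a * x)) \<partial>lborel) = ennreal (exp (a^2 / 2))"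
proof -
  have eq: "std_normal_density x * exp (a * x) = exp (a^2/2) * normal_density a 1 x" for x
  proof -
    have "exp (- x\<^sup>2 / 2) * exp (a * x) = exp (a^2/2) * exp (- (x - a)\<^sup>2 / 2)"
      by (simp add: exp_add[symmetric] power2_diff field_simps)
    then show ?thesis by (simp add: std_normal_density_def normal_density_def)
  qed
  have "(\<integral>\<^sup>+ x. ennreal (std_normal_density x) * ennreal (exp (a * x)) \<partial>lborel)
      = (\<integral>\<^sup>+ x. ennreal (exp (a^2/2)) * ennreal (normal_density a 1 x) \<partial>lborel)"
    by (rule nn_integral_cong) (simp add: ennreal_mult[symmetric] eq)
  also have "\<dots> = ennreal (exp (a^2/2)) * (\<integral>\<^sup>+ x. ennreal (normal_density a 1 x) \<partial>lborel)"
    by (rule nn_integral_cmult) simp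
  also have "(\<integral>\<^sup>+ x. ennreal (normal_density a 1 x) \<partial>lborel) = 1"
    using integrable_normal_density[of 1 a] integral_normal_density[of 1 a]
    by (subst nn_integral_eq_integral) auto
  finally show ?thesis by simp
qed

lemma (in prob_space) mgf_gauss_sum:
  assumes fin: "finite I" and ind: "indep_vars (\<lambda>_. borel) X I"
    and dist: "\<And>i. i \<in> I \<Longrightarrow> distributed M lborel (X i) (\<lambda>x. ennreal (std_normal_density x))"
  shows "(\<integral>\<^sup>+ \<omega>. ennreal (exp (\<Sum>i\<in>I. c i * X i \<omega>)) \<partial>M) = ennreal (exp ((\<Sum>i\<in>I. (c i)^2) / 2))"
proof -
  have "(\<integral>\<^sup>+ \<omega>. ennreal (exp (\<Sum>i\<in>I. c i * X i \<omega>)) \<partial>M) = (\<integral>\<^sup>+ \<omega>. (\<Prod>i\<in>I. ennreal (exp (c i * X i \<omega>))) \<partial>M)"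
    using fin by (simp add: exp_sum prod_ennreal)
  also have "\<dots> = (\<Prod>i\<in>I. \<integral>\<^sup>+ \<omega>. ennreal (exp (c i * X i \<omega>)) \<partial>M)"
  proof (rule indep_vars_nn_integral[OF fin])
    show "indep_vars (\<lambda>_. borel) (\<lambda>i \<omega>. ennreal (exp (c i * X i \<omega>))) I"
      by (rule indep_vars_compose2[OF ind]) measurable
  qed simp
  also have "\<dots> = (\<Prod>i\<in>I. ennreal (exp ((c i)^2 / 2)))"
  proof (rule prod.cong[OF refl])
    fix i assume i: "i \<in> I"
    have "(\<integral>\<^sup>+ \<omega>. ennreal (exp (c i * X i \<omega>)) \<partial>M) = (\<integral>\<^sup>+ x. ennreal (std_normal_density x) * ennreal (exp (c i * x)) \<partial>lborel)"
      by (rule distributed_nn_integral[OF dist[OF i], symmetric]) measurable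
    also have "\<dots> = ennreal (exp ((c i)^2 / 2))" by (rule mgf_1d)
    finally show "(\<integral>\<^sup>+ \<omega>. ennreal (exp (c i * X i \<omega>)) \<partial>M) = ennreal (exp ((c i)^2 / 2))" .
  qed
  also have "\<dots> = ennreal (exp ((\<Sum>i\<in>I. (c i)^2) / 2))"
    using fin by (simp add: prod_ennreal exp_sum sum_divide_distrib)
  finally show ?thesis .
qed

definition Pp :: "nat \<Rightarrow> nat \<Rightarrow> (nat \<Rightarrow> nat \<Rightarrow> real) measure" where
  "Pp p n = PiM {..<p} (\<lambda>_. unif_sphere n)"

definition Fz :: "nat \<Rightarrow> nat \<Rightarrow> (nat list \<Rightarrow> real) \<Rightarrow> ennreal" where
  "Fz p n T = (\<integral>\<^sup>+ x. ennreal (exp (sqrt (real n) * mlin p n T x)) \<partial>Pp p n)"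

lemma prob_Pp: "n \<ge> 1 \<Longrightarrow> prob_space (Pp p n)"
  unfolding Pp_def by (rule prob_space_PiM) (rule prob_unif)

lemma space_Pp: "x \<in> space (Pp p n) \<Longrightarrow> j < p \<Longrightarrow> x j \<in> sphere_n n"
  by (auto simp: Pp_def space_PiM PiE_iff space_unif)

lemma comp2_meas: "(\<lambda>x. x j i) \<in> borel_measurable (Pp p n)"
proof (cases "j < p")
  case True
  have "(\<lambda>x. x j) \<in> Pp p n \<rightarrow>\<^sub>M unif_sphere n"
    unfolding Pp_def using True by (intro measurable_component_singleton) auto
  from measurable_compose[OF this comp_meas_unif] show ?thesis .
next
  case False
  have "(\<lambda>x. x j i) \<in> borel_measurable (Pp p n) \<longleftrightarrow> (\<lambda>x. (undefined :: nat \<Rightarrow> real) i) \<in> borel_measurable (Pp p n)"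
    by (rule measurable_cong) (use False in \<open>auto simp: Pp_def space_PiM PiE_def extensional_def\<close>)
  then show ?thesis by simp
qed

lemma mlin_meas: "(\<lambda>x. mlin p n T x) \<in> borel_measurable (Pp p n)"
proof -
  note comp2_meas[measurable]
  show ?thesis unfolding mlin_def by measurable
qed

lemma pair_meas:
  assumes Zm: "\<And>xs. xs \<in> tensor_idx p n \<Longrightarrow> (\<lambda>\<omega>. Z \<omega> xs) \<in> borel_measurable M"
  shows "(\<lambda>z. ennreal (exp (c * mlin p n (Z (fst z)) (snd z)))) \<in> borel_measurable (M \<Otimes>\<^sub>M Pp p n)"
proof -
  note comp2_meas[measurable]
  have h: "(\<lambda>z. (\<Prod>j<p. snd z j (xs ! j)) * Z (fst z) xs) \<in> borel_measurable (M \<Otimes>\<^sub>M Pp p n)"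
    if xs: "xs \<in> tensor_idx p n" for xs
  proof -
    note Zm[OF xs, measurable]
    show ?thesis by measurable
  qed
  have "(\<lambda>z. mlin p n (Z (fst z)) (snd z)) \<in> borel_measurable (M \<Otimes>\<^sub>M Pp p n)"
    unfolding mlin_def by (rule borel_measurable_sum) (rule h)
  then show ?thesis by measurable
qed

lemma E_Fz:
  assumes M: "prob_space M" and n: "n \<ge> 1"
    and ind: "prob_space.indep_vars M (\<lambda>_. borel) (\<lambda>xs \<omega>. Z \<omega> xs) (tensor_idx p n)"
    and dist: "\<And>xs. xs \<in> tensor_idx p n \<Longrightarrow> distributed M lborel (\<lambda>\<omega>. Z \<omega> xs) (\<lambda>x. ennreal (std_normal_density x))"
  shows "(\<integral>\<^sup>+ \<omega>. Fz p n (Z \<omega>) \<partial>M) = ennreal (exp (real n / 2))"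
proof -
  interpret M: prob_space M by (rule M)
  interpret P: prob_space "Pp p n" by (rule prob_Pp[OF n])
  have psf: "pair_sigma_finite M (Pp p n)"
    by (simp add: pair_sigma_finite_def M.sigma_finite_measure_axioms P.sigma_finite_measure_axioms)
  have Zm: "(\<lambda>\<omega>. Z \<omega> xs) \<in> borel_measurable M" if "xs \<in> tensor_idx p n" for xs
    using distributed_measurable[OF dist[OF that]] by simp
  have meas: "(\<lambda>z. ennreal (exp (sqrt (real n) * mlin p n (Z (fst z)) (snd z)))) \<in> borel_measurable (M \<Otimes>\<^sub>M Pp p n)"
    by (rule pair_meas[OF Zm])
  have "(\<integral>\<^sup>+ \<omega>. Fz p n (Z \<omega>) \<partial>M) = (\<integral>\<^sup>+ \<omega>. (\<integral>\<^sup>+ x. ennreal (exp (sqrt (real n) * mlin p n (Z \<omega>) x)) \<partial>Pp p n) \<partial>M)"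
    by (simp add: Fz_def)
  also have "\<dots> = (\<integral>\<^sup>+ x. (\<integral>\<^sup>+ \<omega>. ennreal (exp (sqrt (real n) * mlin p n (Z \<omega>) x)) \<partial>M) \<partial>Pp p n)"
    using pair_sigma_finite.Fubini[OF psf meas] by simp
  also have "\<dots> = (\<integral>\<^sup>+ x. ennreal (exp (real n / 2)) \<partial>Pp p n)"
  proof (rule nn_integral_cong)
    fix x assume x: "x \<in> space (Pp p n)"
    have "(\<integral>\<^sup>+ \<omega>. ennreal (exp (sqrt (real n) * mlin p n (Z \<omega>) x)) \<partial>M)
        = (\<integral>\<^sup>+ \<omega>. ennreal (exp (\<Sum>xs\<in>tensor_idx p n. (sqrt (real n) * (\<Prod>j<p. x j (xs ! j))) * Z \<omega> xs)) \<partial>M)"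
      by (simp add: mlin_def sum_distrib_left mult.assoc)
    also have "\<dots> = ennreal (exp ((\<Sum>xs\<in>tensor_idx p n. (sqrt (real n) * (\<Prod>j<p. x j (xs ! j)))^2) / 2))"
      by (rule M.mgf_gauss_sum[OF finite_tensor_idx ind dist])
    also have "(\<Sum>xs\<in>tensor_idx p n. (sqrt (real n) * (\<Prod>j<p. x j (xs ! j)))^2) = real n * (\<Prod>j<p. sqnorm n (x j))"
      by (simp add: power_mult_distrib sum_distrib_left[symmetric] sum_sq_coef)
    also have "(\<Prod>j<p. sqnorm n (x j)) = 1"
      using space_Pp[OF x] by (intro prod.neutral) (auto simp: sphere_n_def)
    finally show "(\<integral>\<^sup>+ \<omega>. ennreal (exp (sqrt (real n) * mlin p n (Z \<omega>) x)) \<partial>M) = ennreal (exp (real n / 2))"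
      by simp
  qed
  also have "\<dots> = ennreal (exp (real n / 2))" by (simp add: P.emeasure_space_1)
  finally show ?thesis .
qed

lemma AE_Fz:
  assumes M: "prob_space M"
    and ind: "\<forall>n\<ge>1. prob_space.indep_vars M (\<lambda>_. borel) (\<lambda>xs \<omega>. Z n \<omega> xs) (tensor_idx p n)"
    and dist: "\<forall>n\<ge>1. \<forall>xs\<in>tensor_idx p n. distributed M lborel (\<lambda>\<omega>. Z n \<omega> xs) (\<lambda>x. ennreal (std_normal_density x))"
  shows "AE \<omega> in M. eventually (\<lambda>n. Fz p n (Z n \<omega>) \<le> ennreal (exp (3 * real n / 2))) sequentially"
proof -
  interpret M: prob_space M by (rule M)
  define A where "A n = (if n \<ge> 1 then {\<omega> \<in> space M. ennreal (exp (3 * real n / 2)) < Fz p n (Z n \<omega>)} else {})" for n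
  have Fm: "(\<lambda>\<omega>. Fz p n (Z n \<omega>)) \<in> borel_measurable M" if n: "n \<ge> 1" for n
  proof -
    interpret P: prob_space "Pp p n" by (rule prob_Pp[OF n])
    have Zm: "(\<lambda>\<omega>. Z n \<omega> xs) \<in> borel_measurable M" if "xs \<in> tensor_idx p n" for xs
      using distributed_measurable[of M lborel] dist n that by fastforce
    show ?thesis unfolding Fz_def
      by (rule P.borel_measurable_nn_integral) (use pair_meas[OF Zm] in \<open>simp add: case_prod_unfold\<close>)
  qed
  have Asets: "A n \<in> sets M" for n
    using Fm[of n] unfolding A_def by auto
  have Ale: "emeasure M (A n) \<le> ennreal (exp (- real n))" for n
  proof (cases "n \<ge> 1")
    case False then show ?thesis by (simp add: A_def)
  next
    case n: True
    let ?c = "ennreal (exp (- (3 * real n / 2)))"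
    have sub: "A n \<subseteq> {\<omega> \<in> space M. 1 \<le> ?c * Fz p n (Z n \<omega>)}"
    proof
      fix \<omega> assume "\<omega> \<in> A n"
      then have w: "\<omega> \<in> space M" "ennreal (exp (3 * real n / 2)) < Fz p n (Z n \<omega>)" using n by (auto simp: A_def)
      have "1 = ?c * ennreal (exp (3 * real n / 2))"
        by (simp add: ennreal_mult[symmetric] exp_add[symmetric])
      also have "\<dots> \<le> ?c * Fz p n (Z n \<omega>)" using w(2) by (intro mult_left_mono) auto
      finally show "\<omega> \<in> {\<omega> \<in> space M. 1 \<le> ?c * Fz p n (Z n \<omega>)}" using w(1) by simp
    qed
    have "emeasure M (A n) \<le> emeasure M {\<omega> \<in> space M. 1 \<le> ?c * Fz p n (Z n \<omega>)}"
      by (rule emeasure_mono[OF sub]) (use Fm[OF n] in measurable)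
    also have "\<dots> \<le> ?c * (\<integral>\<^sup>+ \<omega>. Fz p n (Z n \<omega>) * indicator (space M) \<omega> \<partial>M)"
      by (rule nn_integral_Markov_inequality) (use Fm[OF n] in measurable)
    also have "(\<integral>\<^sup>+ \<omega>. Fz p n (Z n \<omega>) * indicator (space M) \<omega> \<partial>M) = (\<integral>\<^sup>+ \<omega>. Fz p n (Z n \<omega>) \<partial>M)"
      by (rule nn_integral_cong) simp
    also have "\<dots> = ennreal (exp (real n / 2))"
      by (rule E_Fz[OF M n]) (use ind dist n in auto)
    also have "?c * ennreal (exp (real n / 2)) = ennreal (exp (- real n))"
      by (simp add: ennreal_mult[symmetric] exp_add[symmetric])
    finally show ?thesis .
  qed
  have mle: "measure M (A n) \<le> exp (- real n)" for n
    using Ale[of n] by (simp add: M.emeasure_eq_measure)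
  have "summable (\<lambda>n. exp (- real n))"
  proof -
    have "(\<lambda>n. exp (- real n)) = (\<lambda>n. exp (- 1) ^ n)"
      by (simp add: exp_of_nat_mult[symmetric])
    then show ?thesis by (simp add: summable_geometric)
  qed
  then have "summable (\<lambda>n. measure M (A n))"
    by (rule summable_comparison_test'[where N=0]) (use mle in simp)
  then have "AE \<omega> in M. eventually (\<lambda>n. \<omega> \<in> space M - A n) sequentially"
    by (intro borel_cantelli_AE1 Asets) (auto simp: M.emeasure_eq_measure)
  then show ?thesis
  proof (rule AE_mp, intro AE_I2 impI)
    fix \<omega> assume "eventually (\<lambda>n. \<omega> \<in> space M - A n) sequentially"
    then show "eventually (\<lambda>n. Fz p n (Z n \<omega>) \<le> ennreal (exp (3 * real n / 2))) sequentially"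
      using eventually_ge_at_top[of "1::nat"]
      by eventually_elim (auto simp: A_def not_less)
  qed
qed

lemma mlin_cong: "(\<And>j i. j < p \<Longrightarrow> i < n \<Longrightarrow> x j i = y j i) \<Longrightarrow> mlin p n T x = mlin p n T y"
  unfolding mlin_def by (intro sum.cong refl arg_cong2[where f="(*)"] prod.cong) (auto intro: tensor_idx_lt)

lemma prod_if_split:
  assumes "finite A" "k \<in> A"
  shows "(\<Prod>j\<in>A. if j = k then f j else b j) = f k * (\<Prod>j\<in>A-{k}. (b j :: real))"
proof -
  have "(\<Prod>j\<in>A. if j = k then f j else b j) = f k * (\<Prod>j\<in>A-{k}. if j = k then f j else b j)"
    using assms by (subst prod.remove[of _ k]) auto
  also have "(\<Prod>j\<in>A-{k}. if j = k then f j else b j) = (\<Prod>j\<in>A-{k}. b j)"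
    by (rule prod.cong) auto
  finally show ?thesis .
qed

lemma prod_if_scale:
  assumes "finite A" "k \<in> A"
  shows "(\<Prod>j\<in>A. if j = k then c * a j else b j) = c * (\<Prod>j\<in>A. if j = k then a j else (b j :: real))"
  using prod_if_split[OF assms, of "\<lambda>j. c * a j" b] prod_if_split[OF assms, of a b] by simp

lemma prod_if_diff:
  assumes "finite A" "k \<in> A"
  shows "(\<Prod>j\<in>A. if j = k then a1 else b j) - (\<Prod>j\<in>A. if j = k then a2 else b j)
     = (\<Prod>j\<in>A. if j = k then a1 - a2 else (b j :: real))"
proof -
  have e: "(\<Prod>j\<in>A. if j = k then a else b j) = a * (\<Prod>j\<in>A-{k}. b j)" for a
  proof -
    have "(\<Prod>j\<in>A. if j = k then a else b j) = a * (\<Prod>j\<in>A-{k}. if j = k then a else b j)"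
      using assms by (subst prod.remove[of _ k]) auto
    also have "(\<Prod>j\<in>A-{k}. if j = k then a else b j) = (\<Prod>j\<in>A-{k}. b j)"
      by (rule prod.cong) auto
    finally show ?thesis .
  qed
  show ?thesis unfolding e by (simp add: algebra_simps)
qed

lemma mlin_scale_slot:
  assumes "k < p"
  shows "mlin p n T (\<lambda>j. if j = k then (\<lambda>i. c * z i) else x j) = c * mlin p n T (\<lambda>j. if j = k then z else x j)"
proof -
  have "(\<Prod>j<p. (if j = k then (\<lambda>i. c * z i) else x j) (xs ! j)) = c * (\<Prod>j<p. (if j = k then z else x j) (xs ! j))" for xs
    using prod_if_scale[of "{..<p}" k c "\<lambda>j. z (xs ! j)" "\<lambda>j. x j (xs ! j)"] assms
    by (simp add: if_distrib[of "\<lambda>f. f (xs ! _)"])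
  then show ?thesis unfolding mlin_def by (simp add: sum_distrib_left mult.assoc)
qed

lemma mlin_slot_diff:
  assumes "k < p"
  shows "mlin p n T (\<lambda>j. if j = k then a else w j) - mlin p n T (\<lambda>j. if j = k then b else w j)
       = mlin p n T (\<lambda>j. if j = k then (\<lambda>i. a i - b i) else w j)"
proof -
  have "(\<Prod>j<p. (if j = k then a else w j) (xs ! j)) - (\<Prod>j<p. (if j = k then b else w j) (xs ! j))
      = (\<Prod>j<p. (if j = k then (\<lambda>i. a i - b i) else w j) (xs ! j))" for xs
    using prod_if_diff[of "{..<p}" k "a (xs ! k)" "\<lambda>j. w j (xs ! j)" "b (xs ! k)"] assms
    by (simp add: if_distrib[of "\<lambda>f. f (xs ! _)"] cong: if_cong)
  then show ?thesis unfolding mlin_def by (simp add: sum_subtractf[symmetric] algebra_simps)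
qed

lemma mlin_scale_all: "mlin p n T (\<lambda>j i. c j * z j i) = (\<Prod>j<p. c j) * mlin p n T z"
  unfolding mlin_def by (simp add: prod.distrib sum_distrib_left mult.assoc)

definition BS :: "nat \<Rightarrow> nat \<Rightarrow> (nat \<Rightarrow> nat \<Rightarrow> real) set" where
  "BS p n = {x. \<forall>j<p. sqnorm n (x j) \<le> 1}"

lemma sqnorm_coord_le: "i < n \<Longrightarrow> (x i)^2 \<le> sqnorm n x"
  unfolding sqnorm_def by (rule member_le_sum) auto

lemma BS_coord: "x \<in> BS p n \<Longrightarrow> j < p \<Longrightarrow> i < n \<Longrightarrow> \<bar>x j i\<bar> \<le> 1"
proof -
  assume a: "x \<in> BS p n" "j < p" "i < n"
  have "(x j i)^2 \<le> 1" using sqnorm_coord_le[of i n "x j"] a by (auto simp: BS_def)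
  then show ?thesis by (simp add: abs_square_le_1)
qed

lemma mlin_bound_BS: "x \<in> BS p n \<Longrightarrow> \<bar>mlin p n T x\<bar> \<le> (\<Sum>xs\<in>tensor_idx p n. \<bar>T xs\<bar>)"
proof -
  assume x: "x \<in> BS p n"
  have "\<bar>mlin p n T x\<bar> \<le> (\<Sum>xs\<in>tensor_idx p n. \<bar>(\<Prod>j<p. x j (xs ! j)) * T xs\<bar>)"
    unfolding mlin_def by (rule sum_abs)
  also have "\<dots> \<le> (\<Sum>xs\<in>tensor_idx p n. \<bar>T xs\<bar>)"
  proof (rule sum_mono)
    fix xs assume xs: "xs \<in> tensor_idx p n"
    have "\<bar>\<Prod>j<p. x j (xs ! j)\<bar> \<le> 1"
      unfolding abs_prod using BS_coord[OF x _ tensor_idx_lt[OF xs]] by (intro prod_le_1) auto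
    then show "\<bar>(\<Prod>j<p. x j (xs ! j)) * T xs\<bar> \<le> \<bar>T xs\<bar>"
      by (simp add: abs_mult mult_left_le_one_le)
  qed
  finally show ?thesis .
qed

definition Smax :: "nat \<Rightarrow> nat \<Rightarrow> (nat list \<Rightarrow> real) \<Rightarrow> real" where
  "Smax p n T = Sup ((\<lambda>x. \<bar>mlin p n T x\<bar>) ` BS p n)"

lemma BS_ne: "(\<lambda>_ _. 0) \<in> BS p n"
  by (simp add: BS_def sqnorm_def)

lemma bdd_S: "bdd_above ((\<lambda>x. \<bar>mlin p n T x\<bar>) ` BS p n)"
  using mlin_bound_BS by (intro bdd_aboveI) blast

lemma le_Smax: "x \<in> BS p n \<Longrightarrow> \<bar>mlin p n T x\<bar> \<le> Smax p n T"
  unfolding Smax_def by (rule cSup_upper) (use bdd_S in auto)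

lemma Smax_nonneg: "0 \<le> Smax p n T"
  using le_Smax[OF BS_ne, of p n T] by linarith

lemma Smax_least: "(\<And>x. x \<in> BS p n \<Longrightarrow> \<bar>mlin p n T x\<bar> \<le> B) \<Longrightarrow> Smax p n T \<le> B"
  unfolding Smax_def by (rule cSup_least) (use BS_ne in auto)

lemma nrm_zero: "nrm n w = 0 \<Longrightarrow> i < n \<Longrightarrow> w i = 0"
  unfolding nrm_def by (subst (asm) L2_set_eq_0_iff) auto

lemma slot_bound:
  assumes k: "k < p" and W: "\<And>j. j < p \<Longrightarrow> j \<noteq> k \<Longrightarrow> sqnorm n (W j) \<le> 1"
  shows "\<bar>mlin p n T (\<lambda>j. if j = k then w else W j)\<bar> \<le> Smax p n T * nrm n w"
proof (cases "nrm n w = 0")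
  case True
  have "mlin p n T (\<lambda>j. if j = k then w else W j) = mlin p n T (\<lambda>j. if j = k then (\<lambda>i. 0 * w i) else W j)"
    by (rule mlin_cong) (use True nrm_zero in auto)
  also have "\<dots> = 0" by (simp add: mlin_scale_slot[OF k, of _ _ 0 w W] del: mult_zero_left)
  finally show ?thesis using True by simp
next
  case False
  then have pos: "nrm n w > 0" using nrm_nonneg[of n w] by simp
  have "(\<lambda>j. if j = k then w else W j) = (\<lambda>j. if j = k then (\<lambda>i. nrm n w * (w i / nrm n w)) else W j)"
    using pos by (auto simp: fun_eq_iff)
  then have "mlin p n T (\<lambda>j. if j = k then w else W j) = nrm n w * mlin p n T (\<lambda>j. if j = k then (\<lambda>i. w i / nrm n w) else W j)"
    by (simp add: mlin_scale_slot[OF k])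
  moreover have "(\<lambda>j. if j = k then (\<lambda>i. w i / nrm n w) else W j) \<in> BS p n"
  proof -
    have "sqnorm n (\<lambda>i. w i / nrm n w) = sqnorm n w / (nrm n w)^2"
      by (simp add: sqnorm_def power_divide sum_divide_distrib)
    also have "\<dots> = 1" using pos nrm_sqrt[of n w] by (auto simp: nrm_sq)
    finally show ?thesis using W by (auto simp: BS_def)
  qed
  ultimately show ?thesis using le_Smax pos by (simp add: abs_mult mult.commute)
qed

lemma mlin_lip:
  assumes x: "x \<in> BS p n" and y: "y \<in> BS p n"
  shows "mlin p n T x \<le> mlin p n T y + Smax p n T * (\<Sum>k<p. nrm n (\<lambda>i. x k i - y k i))"
proof -
  define H where "H k = (\<lambda>j. if j < k then y j else x j)" for k
  have step: "mlin p n T (H k) - mlin p n T (H (Suc k)) \<le> Smax p n T * nrm n (\<lambda>i. x k i - y k i)" if k: "k < p" for k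
  proof -
    define W where "W j = (if j < k then y j else x j)" for j
    have "H k = (\<lambda>j. if j = k then x k else W j)" by (auto simp: H_def W_def fun_eq_iff)
    moreover have "H (Suc k) = (\<lambda>j. if j = k then y k else W j)" by (auto simp: H_def W_def fun_eq_iff)
    ultimately have "mlin p n T (H k) - mlin p n T (H (Suc k)) = mlin p n T (\<lambda>j. if j = k then (\<lambda>i. x k i - y k i) else W j)"
      by (simp add: mlin_slot_diff[OF k])
    also have "\<dots> \<le> \<bar>mlin p n T (\<lambda>j. if j = k then (\<lambda>i. x k i - y k i) else W j)\<bar>" by simp
    also have "\<dots> \<le> Smax p n T * nrm n (\<lambda>i. x k i - y k i)"
      by (rule slot_bound[OF k]) (use x y in \<open>auto simp: W_def BS_def\<close>)
    finally show ?thesis .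
  qed
  have "mlin p n T (H 0) - mlin p n T (H p) = (\<Sum>k<p. mlin p n T (H k) - mlin p n T (H (Suc k)))"
    by (rule sum_lessThan_telescope'[symmetric])
  also have "\<dots> \<le> (\<Sum>k<p. Smax p n T * nrm n (\<lambda>i. x k i - y k i))"
    by (rule sum_mono) (use step in auto)
  finally have "mlin p n T (H 0) - mlin p n T (H p) \<le> Smax p n T * (\<Sum>k<p. nrm n (\<lambda>i. x k i - y k i))"
    by (simp add: sum_distrib_left)
  moreover have "H 0 = x" by (simp add: H_def)
  moreover have "mlin p n T (H p) = mlin p n T y" by (rule mlin_cong) (simp add: H_def)
  ultimately show ?thesis by simp
qed

lemma bnd_int:
  assumes "finite_measure M" "f \<in> borel_measurable M" "\<And>x. x \<in> space M \<Longrightarrow> \<bar>f x\<bar> \<le> (B::real)"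
  shows "integrable M f"
  using assms by (intro finite_measure.integrable_const_bound[where B=B]) (auto intro: AE_I2)

lemma CS_ind:
  assumes fm: "finite_measure M" and C: "C \<in> sets M" and m: "measure M C > 0"
    and g: "g \<in> borel_measurable M" and gb: "\<And>x. x \<in> space M \<Longrightarrow> \<bar>g x\<bar> \<le> (B::real)"
  shows "(\<integral>x. indicator C x * g x \<partial>M)^2 \<le> measure M C * (\<integral>x. indicator C x * (g x)^2 \<partial>M)"
proof -
  interpret finite_measure M by (rule fm)
  define I1 where "I1 = (\<integral>x. indicator C x * g x \<partial>M)"
  define I2 where "I2 = (\<integral>x. indicator C x * (g x)^2 \<partial>M)"
  define a where "a = I1 / measure M C"
  have B: "0 \<le> B" if "space M \<noteq> {}" using gb that by (meson abs_ge_zero all_not_in_conv order_trans)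
  have i1: "integrable M (\<lambda>x. indicator C x * g x)"
    by (rule bnd_int[OF fm, where B=B]) (use C g gb B in \<open>auto simp: indicator_def\<close>)
  have i2: "integrable M (\<lambda>x. indicator C x * (g x)^2)"
  proof (rule bnd_int[OF fm, where B="B^2"])
    fix x assume x: "x \<in> space M"
    have "(g x)^2 \<le> B^2" using gb[OF x] by (metis abs_ge_zero power2_abs power_mono)
    then show "\<bar>indicator C x * (g x)^2\<bar> \<le> B^2" by (auto simp: indicator_def)
  qed (use C g in measurable)
  have i0: "integrable M (indicator C :: _ \<Rightarrow> real)"
    using C by (simp add: emeasure_eq_measure)
  have "0 \<le> (\<integral>x. indicator C x * (g x - a)^2 \<partial>M)"
    by (rule Bochner_Integration.integral_nonneg) (auto simp: indicator_def)
  also have "(\<integral>x. indicator C x * (g x - a)^2 \<partial>M)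
      = (\<integral>x. indicator C x * (g x)^2 - (2 * a) * (indicator C x * g x) + a^2 * indicator C x \<partial>M)"
    by (rule Bochner_Integration.integral_cong) (auto simp: indicator_def power2_diff algebra_simps)
  also have "\<dots> = I2 - (2 * a) * I1 + a^2 * measure M C"
    using i0 i1 i2 C by (simp add: I1_def I2_def)
  also have "\<dots> = I2 - I1^2 / measure M C"
    using m by (simp add: a_def field_simps power2_eq_square)
  finally have "I1^2 / measure M C \<le> I2" by simp
  then have "I1^2 \<le> measure M C * I2" using m by (simp add: divide_le_eq mult.commute)
  then show ?thesis unfolding I1_def I2_def .
qed

definition avgv :: "nat \<Rightarrow> (nat \<Rightarrow> real) set \<Rightarrow> nat \<Rightarrow> real" where
  "avgv n C i = (\<integral>u. indicator C u * u i \<partial>unif_sphere n) / measure (unif_sphere n) C"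

lemma sphere_coord: "u \<in> sphere_n n \<Longrightarrow> i < n \<Longrightarrow> \<bar>u i\<bar> \<le> 1"
proof -
  assume u: "u \<in> sphere_n n" and i: "i < n"
  have "(u i)^2 \<le> 1" using sqnorm_coord_le[OF i, of u] u by (simp add: sphere_n_def)
  then show ?thesis by (simp add: abs_square_le_1)
qed

lemma avg_dev:
  assumes n: "n \<ge> 1" and C: "C \<in> sets (unif_sphere n)" and m: "measure (unif_sphere n) C > 0"
  shows "sqnorm n (\<lambda>i. avgv n C i - c i) \<le> (\<integral>u. indicator C u * sqnorm n (\<lambda>i. u i - c i) \<partial>unif_sphere n) / measure (unif_sphere n) C"
proof -
  let ?U = "unif_sphere n"
  let ?m = "measure ?U C"
  interpret U: prob_space ?U by (rule prob_unif[OF n])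
  note comp_meas_unif[measurable]
  have fm: "finite_measure ?U" by unfold_locales
  have i1: "integrable ?U (\<lambda>u. indicator C u * u i)" if "i < n" for i
    by (rule bnd_int[OF fm, where B=1]) (use C sphere_coord that in \<open>auto simp: indicator_def space_unif\<close>)
  have i0: "integrable ?U (indicator C :: _ \<Rightarrow> real)"
    using C by (simp add: U.emeasure_eq_measure)
  have int_sq: "integrable ?U (\<lambda>u. indicator C u * (u i - c i)^2)" if "i < n" for i
  proof (rule bnd_int[OF fm, where B="(1 + \<bar>c i\<bar>)^2"])
    fix u assume u: "u \<in> space ?U"
    have "\<bar>u i - c i\<bar> \<le> 1 + \<bar>c i\<bar>" using sphere_coord[of u n i] u that by (auto simp: space_unif)
    then have "(u i - c i)^2 \<le> (1 + \<bar>c i\<bar>)^2" by (metis abs_ge_zero power2_abs power_mono)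
    then show "\<bar>indicator C u * (u i - c i)^2\<bar> \<le> (1 + \<bar>c i\<bar>)^2" by (auto simp: indicator_def)
  qed (use C in measurable)
  have eq: "avgv n C i - c i = (\<integral>u. indicator C u * (u i - c i) \<partial>?U) / ?m" if "i < n" for i
  proof -
    have "(\<integral>u. indicator C u * (u i - c i) \<partial>?U) = (\<integral>u. indicator C u * u i - c i * indicator C u \<partial>?U)"
      by (rule Bochner_Integration.integral_cong) (auto simp: algebra_simps)
    also have "\<dots> = (\<integral>u. indicator C u * u i \<partial>?U) - c i * ?m"
      using i1[OF that] i0 C by simp
    finally show ?thesis using m by (simp add: avgv_def field_simps)
  qed
  have "sqnorm n (\<lambda>i. avgv n C i - c i) = (\<Sum>i<n. ((\<integral>u. indicator C u * (u i - c i) \<partial>?U) / ?m)^2)"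
    unfolding sqnorm_def by (rule sum.cong) (auto simp: eq)
  also have "\<dots> \<le> (\<Sum>i<n. (\<integral>u. indicator C u * (u i - c i)^2 \<partial>?U) / ?m)"
  proof (rule sum_mono)
    fix i assume i: "i \<in> {..<n}"
    have "(\<integral>u. indicator C u * (u i - c i) \<partial>?U)^2 \<le> ?m * (\<integral>u. indicator C u * (u i - c i)^2 \<partial>?U)"
    proof (rule CS_ind[OF fm C m, where B="1 + \<bar>c i\<bar>"])
      fix u assume u: "u \<in> space ?U"
      show "\<bar>u i - c i\<bar> \<le> 1 + \<bar>c i\<bar>" using sphere_coord[of u n i] u i by (auto simp: space_unif)
    qed measurable
    then show "((\<integral>u. indicator C u * (u i - c i) \<partial>?U) / ?m)^2 \<le> (\<integral>u. indicator C u * (u i - c i)^2 \<partial>?U) / ?m"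
      using m by (simp add: power_divide field_simps power2_eq_square)
  qed
  also have "\<dots> = (\<Sum>i<n. (\<integral>u. indicator C u * (u i - c i)^2 \<partial>?U)) / ?m"
    by (simp add: sum_divide_distrib)
  also have "(\<Sum>i<n. (\<integral>u. indicator C u * (u i - c i)^2 \<partial>?U)) = (\<integral>u. (\<Sum>i<n. indicator C u * (u i - c i)^2) \<partial>?U)"
    by (rule Bochner_Integration.integral_sum[symmetric]) (use int_sq in auto)
  also have "(\<integral>u. (\<Sum>i<n. indicator C u * (u i - c i)^2) \<partial>?U) = (\<integral>u. indicator C u * sqnorm n (\<lambda>i. u i - c i) \<partial>?U)"
    by (simp add: sqnorm_def sum_distrib_left)
  finally show ?thesis .
qed

lemma avgv_BS:
  assumes n: "n \<ge> 1" and C: "C \<in> sets (unif_sphere n)" and m: "measure (unif_sphere n) C > 0"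
  shows "sqnorm n (avgv n C) \<le> 1"
proof -
  let ?U = "unif_sphere n"
  interpret U: prob_space ?U by (rule prob_unif[OF n])
  have "sqnorm n (\<lambda>i. avgv n C i - 0) \<le> (\<integral>u. indicator C u * sqnorm n (\<lambda>i. u i - 0) \<partial>?U) / measure ?U C"
    by (rule avg_dev[OF n C m])
  also have "(\<integral>u. indicator C u * sqnorm n (\<lambda>i. u i - 0) \<partial>?U) = (\<integral>u. indicator C u \<partial>?U)"
    by (rule Bochner_Integration.integral_cong) (auto simp: space_unif sphere_n_def indicator_def)
  also have "\<dots> = measure ?U C" using C by simp
  finally show ?thesis using m by simp
qed

lemma avgv_cap:
  assumes n: "n \<ge> 1" and m: "measure (unif_sphere n) (cap n \<theta> \<delta>) > 0"
  shows "sqnorm n (\<lambda>i. avgv n (cap n \<theta> \<delta>) i - \<theta> i) \<le> \<delta>^2"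
proof -
  let ?U = "unif_sphere n"
  let ?C = "cap n \<theta> \<delta>"
  interpret U: prob_space ?U by (rule prob_unif[OF n])
  note comp_meas_unif[measurable]
  have fm: "finite_measure ?U" by unfold_locales
  have "sqnorm n (\<lambda>i. avgv n ?C i - \<theta> i) \<le> (\<integral>u. indicator ?C u * sqnorm n (\<lambda>i. u i - \<theta> i) \<partial>?U) / measure ?U ?C"
    by (rule avg_dev[OF n cap_sets m])
  also have "(\<integral>u. indicator ?C u * sqnorm n (\<lambda>i. u i - \<theta> i) \<partial>?U) \<le> (\<integral>u. \<delta>^2 * indicator ?C u \<partial>?U)"
  proof (rule integral_mono)
    show "integrable ?U (\<lambda>u. \<delta>^2 * indicator ?C u)" using cap_sets[of n \<theta> \<delta>] by (simp add: U.emeasure_eq_measure)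
    show "integrable ?U (\<lambda>u. indicator ?C u * sqnorm n (\<lambda>i. u i - \<theta> i))"
    proof (rule bnd_int[OF fm, where B="\<delta>^2"])
      show "(\<lambda>u. indicator ?C u * sqnorm n (\<lambda>i. u i - \<theta> i)) \<in> borel_measurable ?U"
        unfolding sqnorm_def by measurable
      fix u assume "u \<in> space ?U"
      show "\<bar>indicator ?C u * sqnorm n (\<lambda>i. u i - \<theta> i)\<bar> \<le> \<delta>^2"
        by (auto simp: indicator_def cap_def sqnorm_nonneg)
    qed
    fix u show "indicator ?C u * sqnorm n (\<lambda>i. u i - \<theta> i) \<le> \<delta>^2 * indicator ?C u"
      by (auto simp: indicator_def cap_def)
  qed
  also have "(\<integral>u. \<delta>^2 * indicator ?C u \<partial>?U) = \<delta>^2 * measure ?U ?C"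
    using cap_sets[of n \<theta> \<delta>] by simp
  finally show ?thesis using m by (simp add: divide_right_mono)
qed

lemma psf_unif: "n \<ge> 1 \<Longrightarrow> product_sigma_finite (\<lambda>_::nat. unif_sphere n)"
  by (simp add: product_sigma_finite_def prob_space_imp_sigma_finite prob_unif)

lemma space_Pp_BS: "x \<in> space (Pp p n) \<Longrightarrow> x \<in> BS p n"
  using space_Pp[of x p n] by (auto simp: BS_def sphere_n_def)

lemma mlin_bound_space: "x \<in> space (Pp p n) \<Longrightarrow> \<bar>mlin p n T x\<bar> \<le> (\<Sum>xs\<in>tensor_idx p n. \<bar>T xs\<bar>)"
  by (rule mlin_bound_BS[OF space_Pp_BS])

lemma indicator_PiE_prod:
  assumes "x \<in> extensional I" "finite I"
  shows "indicator (PiE I C) x = (\<Prod>j\<in>I. indicator (C j) (x j) :: real)"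
proof (cases "x \<in> PiE I C")
  case True
  then show ?thesis by (auto simp: PiE_iff indicator_def intro!: prod.neutral[symmetric])
next
  case False
  then obtain j where j: "j \<in> I" "x j \<notin> C j" using assms by (auto simp: PiE_iff)
  then have "(\<Prod>j\<in>I. indicator (C j) (x j) :: real) = 0"
    using assms j by (intro prod_zero) (auto intro!: bexI[of _ j])
  then show ?thesis using False by simp
qed

lemma cap_avg_bound:
  assumes n: "n \<ge> 1" and p: "p \<ge> 1"
    and F: "Fz p n T \<le> ennreal (exp (3 * real n / 2))"
    and th: "\<And>j. j < p \<Longrightarrow> sqnorm n (\<theta> j) = 1"
  shows "mlin p n T \<theta> \<le> sqrt (real n) * (3/2 + real p * ln (40 * real p)) + Smax p n T / 2"
proof -
  let ?U = "unif_sphere n"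
  let ?P = "Pp p n"
  define \<delta> where "\<delta> = 1 / (2 * real p)"
  have d: "0 < \<delta>" "\<delta> \<le> 1" using p by (auto simp: \<delta>_def field_simps)
  define C where "C j = cap n (\<theta> j) \<delta>" for j
  define m where "m j = measure ?U (C j)" for j
  define v where "v j = avgv n (C j)" for j
  define PC where "PC = PiE {..<p} C"
  define Q where "Q = (\<Prod>j<p. m j)"
  define t where "t = sqrt (real n)"
  define a where "a = mlin p n T v"
  define SB where "SB = (\<Sum>xs\<in>tensor_idx p n. \<bar>T xs\<bar>)"
  interpret U: prob_space ?U by (rule prob_unif[OF n])
  interpret P: prob_space ?P by (rule prob_Pp[OF n])
  have fmP: "finite_measure ?P" by unfold_locales
  have fmU: "finite_measure ?U" by unfold_locales
  note comp_meas_unif[measurable] comp2_meas[measurable] mlin_meas[measurable]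
  have Cs[measurable]: "C j \<in> sets ?U" for j by (simp add: C_def)
  have mlow: "m j \<ge> (\<delta> / 20)^n" if "j < p" for j
  proof -
    have "ennreal ((\<delta> / 20)^n) \<le> emeasure ?U (C j)"
      unfolding C_def by (rule cap_lower[OF n th[OF that] d])
    then show ?thesis by (simp add: m_def U.emeasure_eq_measure)
  qed
  have mpos: "m j > 0" if "j < p" for j
    using mlow[OF that] d by (meson less_le_trans zero_less_divide_iff zero_less_numeral zero_less_power)
  have PCs[measurable]: "PC \<in> sets ?P"
    unfolding PC_def Pp_def by (rule sets_PiM_I_finite) auto
  have Q_eq: "measure ?P PC = Q"
  proof -
    have "emeasure ?P PC = (\<Prod>j<p. emeasure ?U (C j))"
      unfolding PC_def Pp_def by (rule product_sigma_finite.emeasure_PiM[OF psf_unif[OF n]]) auto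
    also have "\<dots> = ennreal Q"
      by (simp add: Q_def m_def U.emeasure_eq_measure prod_ennreal)
    finally show ?thesis by (simp add: P.emeasure_eq_measure Q_def m_def prod_nonneg)
  qed
  have Qlow: "Q \<ge> (\<delta> / 20)^(n * p)"
  proof -
    have "(\<Prod>j<p. (\<delta> / 20)^n) \<le> Q" unfolding Q_def
      by (rule prod_mono) (use mlow d in auto)
    then show ?thesis by (simp add: power_mult)
  qed
  have Qpos: "Q > 0" using Qlow d by (meson less_le_trans zero_less_divide_iff zero_less_numeral zero_less_power)
  have ind_int: "integrable ?U (\<lambda>u. indicator (C j) u * u i)" if "i < n" for j i
    by (rule bnd_int[OF fmU, where B=1]) (use sphere_coord that in \<open>auto simp: indicator_def space_unif\<close>)
  have avg: "(\<integral>x. indicator PC x * mlin p n T x \<partial>?P) = Q * a"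
  proof -
    have "(\<integral>x. indicator PC x * mlin p n T x \<partial>?P)
        = (\<integral>x. (\<Sum>xs\<in>tensor_idx p n. T xs * (\<Prod>j<p. indicator (C j) (x j) * x j (xs ! j))) \<partial>?P)"
    proof (rule Bochner_Integration.integral_cong[OF refl])
      fix x assume x: "x \<in> space ?P"
      have "indicator PC x = (\<Prod>j<p. indicator (C j) (x j) :: real)"
        unfolding PC_def by (rule indicator_PiE_prod) (use x in \<open>auto simp: Pp_def space_PiM PiE_def\<close>)
      then show "indicator PC x * mlin p n T x = (\<Sum>xs\<in>tensor_idx p n. T xs * (\<Prod>j<p. indicator (C j) (x j) * x j (xs ! j)))"
        by (simp add: mlin_def sum_distrib_left prod.distrib algebra_simps)
    qed
    also have "\<dots> = (\<Sum>xs\<in>tensor_idx p n. T xs * (\<integral>x. (\<Prod>j<p. indicator (C j) (x j) * x j (xs ! j)) \<partial>?P))"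
    proof -
      have "integrable ?P (\<lambda>x. T xs * (\<Prod>j<p. indicator (C j) (x j) * x j (xs ! j)))" if xs: "xs \<in> tensor_idx p n" for xs
      proof (rule bnd_int[OF fmP, where B="\<bar>T xs\<bar>"])
        fix x assume x: "x \<in> space ?P"
        have "\<bar>\<Prod>j<p. indicator (C j) (x j) * x j (xs ! j)\<bar> \<le> 1"
          unfolding abs_prod
        proof (rule prod_le_1)
          fix j assume j: "j \<in> {..<p}"
          have "\<bar>x j (xs ! j)\<bar> \<le> 1"
            using sphere_coord[OF space_Pp[OF x] tensor_idx_lt[OF xs]] j by auto
          then show "0 \<le> \<bar>indicator (C j) (x j) * x j (xs ! j)\<bar> \<and> \<bar>indicator (C j) (x j) * x j (xs ! j)\<bar> \<le> 1"
            by (auto simp: indicator_def)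
        qed
        then show "\<bar>T xs * (\<Prod>j<p. indicator (C j) (x j) * x j (xs ! j))\<bar> \<le> \<bar>T xs\<bar>"
          by (simp add: abs_mult mult_left_le)
      next
        have [measurable]: "(\<lambda>x. x j) \<in> ?P \<rightarrow>\<^sub>M ?U" if "j < p" for j
          unfolding Pp_def using that by (intro measurable_component_singleton) auto
        show "(\<lambda>x. T xs * (\<Prod>j<p. indicator (C j) (x j) * x j (xs ! j))) \<in> borel_measurable ?P"
          by measurable
      qed
      then show ?thesis by (subst Bochner_Integration.integral_sum) auto
    qed
    also have "\<dots> = (\<Sum>xs\<in>tensor_idx p n. T xs * (\<Prod>j<p. m j * v j (xs ! j)))"
    proof (rule sum.cong[OF refl])
      fix xs assume xs: "xs \<in> tensor_idx p n"
      have "(\<integral>x. (\<Prod>j<p. indicator (C j) (x j) * x j (xs ! j)) \<partial>?P) = (\<Prod>j<p. \<integral>u. indicator (C j) u * u (xs ! j) \<partial>?U)"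
        unfolding Pp_def
        by (rule product_sigma_finite.product_integral_prod[OF psf_unif[OF n], where f="\<lambda>j u. indicator (C j) u * u (xs ! j)"])
           (auto intro: ind_int tensor_idx_lt[OF xs])
      also have "\<dots> = (\<Prod>j<p. m j * v j (xs ! j))"
      proof (rule prod.cong[OF refl])
        fix j assume j: "j \<in> {..<p}"
        then have "m j > 0" by (simp add: mpos)
        then show "(\<integral>u. indicator (C j) u * u (xs ! j) \<partial>?U) = m j * v j (xs ! j)"
          by (simp add: v_def avgv_def m_def)
      qed
      finally show "T xs * (\<integral>x. (\<Prod>j<p. indicator (C j) (x j) * x j (xs ! j)) \<partial>?P) = T xs * (\<Prod>j<p. m j * v j (xs ! j))"
        by simp
    qed
    also have "\<dots> = Q * a"
      by (simp add: a_def mlin_def Q_def prod.distrib sum_distrib_left algebra_simps)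
    finally show ?thesis .
  qed
  have int_m: "integrable ?P (\<lambda>x. indicator PC x * mlin p n T x)"
    by (rule bnd_int[OF fmP, where B=SB]) (use mlin_bound_space in \<open>auto simp: indicator_def SB_def\<close>)
  have int_e: "integrable ?P (\<lambda>x. exp (t * mlin p n T x))"
  proof (rule bnd_int[OF fmP, where B="exp (t * SB)"])
    fix x assume x: "x \<in> space ?P"
    have "t * mlin p n T x \<le> t * SB"
      using mlin_bound_space[OF x, of T] by (intro mult_left_mono) (auto simp: SB_def t_def)
    then show "\<bar>exp (t * mlin p n T x)\<bar> \<le> exp (t * SB)" by simp
  qed measurable
  have int_ie: "integrable ?P (\<lambda>x. indicator PC x * exp (t * mlin p n T x))"
    using integrable_real_mult_indicator[OF PCs int_e] by (simp add: mult.commute)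
  have jensen: "Q * exp (t * a) \<le> (\<integral>x. indicator PC x * exp (t * mlin p n T x) \<partial>?P)"
  proof -
    have "(\<integral>x. indicator PC x * exp (t * a) * (1 + t * mlin p n T x - t * a) \<partial>?P)
        \<le> (\<integral>x. indicator PC x * exp (t * mlin p n T x) \<partial>?P)"
    proof (rule integral_mono)
      show "integrable ?P (\<lambda>x. indicator PC x * exp (t * a) * (1 + t * mlin p n T x - t * a))"
      proof -
        have "(\<lambda>x. indicator PC x * exp (t * a) * (1 + t * mlin p n T x - t * a))
           = (\<lambda>x. (exp (t * a) * (1 - t * a)) * indicator PC x + (exp (t * a) * t) * (indicator PC x * mlin p n T x))"
          by (auto simp: fun_eq_iff algebra_simps)
        moreover have "integrable ?P (indicator PC :: _ \<Rightarrow> real)" using PCs by (simp add: P.emeasure_eq_measure)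
        ultimately show ?thesis using int_m by simp
      qed
      show "integrable ?P (\<lambda>x. indicator PC x * exp (t * mlin p n T x))" by (rule int_ie)
      fix x
      have "exp (t * a) * (1 + (t * mlin p n T x - t * a)) \<le> exp (t * a) * exp (t * mlin p n T x - t * a)"
        by (intro mult_left_mono exp_ge_add_one_self) auto
      also have "\<dots> = exp (t * mlin p n T x)" by (simp add: exp_add[symmetric])
      finally show "indicator PC x * exp (t * a) * (1 + t * mlin p n T x - t * a) \<le> indicator PC x * exp (t * mlin p n T x)"
        by (auto simp: indicator_def algebra_simps)
    qed
    moreover have "(\<integral>x. indicator PC x * exp (t * a) * (1 + t * mlin p n T x - t * a) \<partial>?P)
        = (\<integral>x. (exp (t * a) * (1 - t * a)) * indicator PC x + (exp (t * a) * t) * (indicator PC x * mlin p n T x) \<partial>?P)"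
      by (rule Bochner_Integration.integral_cong) (auto simp: algebra_simps)
    moreover have "\<dots> = (exp (t * a) * (1 - t * a)) * Q + (exp (t * a) * t) * (Q * a)"
      using int_m PCs avg Q_eq by (simp add: P.emeasure_eq_measure)
    moreover have "\<dots> = Q * exp (t * a)" by (simp add: algebra_simps)
    ultimately show ?thesis by simp
  qed
  have "(\<integral>x. indicator PC x * exp (t * mlin p n T x) \<partial>?P) \<le> (\<integral>x. exp (t * mlin p n T x) \<partial>?P)"
    by (rule integral_mono[OF int_ie int_e]) (auto simp: indicator_def)
  also have "\<dots> \<le> exp (3 * real n / 2)"
  proof -
    have "Fz p n T = ennreal (\<integral>x. exp (t * mlin p n T x) \<partial>?P)"
      unfolding Fz_def t_def by (rule nn_integral_eq_integral) (use int_e in \<open>auto simp: t_def\<close>)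
    then show ?thesis using F by (simp add: ennreal_le_iff2)
  qed
  finally have "Q * exp (t * a) \<le> exp (3 * real n / 2)" using jensen by linarith
  then have "ln Q + t * a \<le> 3 * real n / 2"
    using Qpos by (metis exp_le_cancel_iff exp_ln exp_add mult.commute)
  moreover have "ln Q \<ge> real (n * p) * ln (\<delta> / 20)"
    using Qlow d by (metis ln_le_cancel_iff ln_realpow zero_less_divide_iff zero_less_numeral zero_less_power Qpos)
  moreover have "ln (\<delta> / 20) = - ln (40 * real p)"
    using p by (simp add: \<delta>_def ln_div[symmetric] ln_inverse[symmetric] field_simps)
  ultimately have ta: "t * a \<le> 3 * real n / 2 + real n * real p * ln (40 * real p)"
    by simp
  have tpos: "t > 0" using n by (simp add: t_def)
  have aB: "a \<le> sqrt (real n) * (3/2 + real p * ln (40 * real p))"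
  proof -
    have tt: "t * t = real n" by (simp add: t_def)
    have "t * (t * (3/2 + real p * ln (40 * real p))) = (t * t) * (3/2 + real p * ln (40 * real p))"
      by (simp add: algebra_simps)
    also have "\<dots> = 3 * real n / 2 + real n * real p * ln (40 * real p)"
      unfolding tt by (simp add: algebra_simps)
    finally have "t * a \<le> t * (t * (3/2 + real p * ln (40 * real p)))"
      using ta by linarith
    then show ?thesis using tpos by (simp add: t_def)
  qed
  have thBS: "\<theta> \<in> BS p n" using th by (simp add: BS_def)
  have vBS: "v \<in> BS p n"
    using avgv_BS[OF n Cs] mpos by (auto simp: BS_def v_def m_def)
  have "mlin p n T \<theta> \<le> mlin p n T v + Smax p n T * (\<Sum>k<p. nrm n (\<lambda>i. \<theta> k i - v k i))"
    by (rule mlin_lip[OF thBS vBS])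
  also have "(\<Sum>k<p. nrm n (\<lambda>i. \<theta> k i - v k i)) \<le> (\<Sum>k<p. \<delta>)"
  proof (rule sum_mono)
    fix k assume k: "k \<in> {..<p}"
    have "sqnorm n (\<lambda>i. v k i - \<theta> k i) \<le> \<delta>^2"
      unfolding v_def C_def by (rule avgv_cap[OF n]) (use mpos k in \<open>auto simp: m_def C_def\<close>)
    moreover have "sqnorm n (\<lambda>i. \<theta> k i - v k i) = sqnorm n (\<lambda>i. v k i - \<theta> k i)"
      by (simp add: sqnorm_def power2_commute)
    ultimately have "nrm n (\<lambda>i. \<theta> k i - v k i) \<le> sqrt (\<delta>^2)"
      unfolding nrm_sqrt by (metis real_sqrt_le_mono)
    then show "nrm n (\<lambda>i. \<theta> k i - v k i) \<le> \<delta>" using d by simp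
  qed
  then have "Smax p n T * (\<Sum>k<p. nrm n (\<lambda>i. \<theta> k i - v k i)) \<le> Smax p n T * (\<Sum>k<p. \<delta>)"
    by (intro mult_left_mono Smax_nonneg)
  also have "(\<Sum>k<p. \<delta>) = 1/2" using p by (simp add: \<delta>_def)
  finally show ?thesis using aB by (simp add: a_def)
qed

lemma sup_bound:
  assumes n: "n \<ge> 1" and p: "p \<ge> 1"
    and F: "Fz p n T \<le> ennreal (exp (3 * real n / 2))"
  shows "Smax p n T \<le> sqrt (real n) * (3 + 2 * real p * ln (40 * real p))"
proof -
  define B where "B = sqrt (real n) * (3/2 + real p * ln (40 * real p)) + Smax p n T / 2"
  have sph: "\<bar>mlin p n T \<theta>\<bar> \<le> B" if th: "\<And>j. j < p \<Longrightarrow> sqnorm n (\<theta> j) = 1" for \<theta>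
  proof -
    have up: "mlin p n T \<theta> \<le> B" unfolding B_def by (rule cap_avg_bound[OF n p F th])
    define \<theta>' where "\<theta>' = (\<lambda>j. if j = 0 then (\<lambda>i. (-1) * \<theta> 0 i) else \<theta> j)"
    have k: "0 < p" using p by simp
    have "mlin p n T \<theta>' = (-1) * mlin p n T (\<lambda>j. if j = 0 then \<theta> 0 else \<theta> j)"
      unfolding \<theta>'_def by (rule mlin_scale_slot[OF k])
    also have "(\<lambda>j. if j = 0 then \<theta> 0 else \<theta> j) = \<theta>" by auto
    finally have eq: "mlin p n T \<theta>' = - mlin p n T \<theta>" by simp
    have "mlin p n T \<theta>' \<le> B" unfolding B_def
    proof (rule cap_avg_bound[OF n p F])
      fix j assume j: "j < p"
      show "sqnorm n (\<theta>' j) = 1"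
      proof (cases "j = 0")
        case True
        have "sqnorm n (\<lambda>i. (-1) * \<theta> 0 i) = sqnorm n (\<theta> 0)" by (simp add: sqnorm_def)
        then show ?thesis using True th[OF k] by (simp add: \<theta>'_def)
      qed (use th j in \<open>simp add: \<theta>'_def\<close>)
    qed
    then show ?thesis using up eq by simp
  qed
  have ball: "\<bar>mlin p n T x\<bar> \<le> B" if x: "x \<in> BS p n" for x
  proof -
    define nt where "nt j = (if nrm n (x j) = 0 then e0 n else (\<lambda>i. x j i / nrm n (x j)))" for j
    have nt1: "sqnorm n (nt j) = 1" for j
    proof (cases "nrm n (x j) = 0")
      case True then show ?thesis by (simp add: nt_def sqnorm_e0[OF n])
    next
      case False
      then have pos: "nrm n (x j) > 0" using nrm_nonneg[of n "x j"] by simp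
      have "sqnorm n (\<lambda>i. x j i / nrm n (x j)) = sqnorm n (x j) / (nrm n (x j))^2"
        by (simp add: sqnorm_def power_divide sum_divide_distrib)
      also have "\<dots> = 1" using pos nrm_sqrt[of n "x j"] by (auto simp: nrm_sq)
      finally show ?thesis using False by (simp add: nt_def)
    qed
    have "mlin p n T x = mlin p n T (\<lambda>j i. nrm n (x j) * nt j i)"
    proof (rule mlin_cong)
      fix j i assume "j < p" "i < n"
      then show "x j i = nrm n (x j) * nt j i"
        by (cases "nrm n (x j) = 0") (auto simp: nt_def nrm_zero)
    qed
    also have "\<dots> = (\<Prod>j<p. nrm n (x j)) * mlin p n T nt" by (rule mlin_scale_all)
    finally have eq: "mlin p n T x = (\<Prod>j<p. nrm n (x j)) * mlin p n T nt" .
    have pr: "0 \<le> (\<Prod>j<p. nrm n (x j))" "(\<Prod>j<p. nrm n (x j)) \<le> 1"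
    proof -
      show "0 \<le> (\<Prod>j<p. nrm n (x j))" by (simp add: nrm_nonneg prod_nonneg)
      show "(\<Prod>j<p. nrm n (x j)) \<le> 1"
      proof (rule prod_le_1)
        fix j assume "j \<in> {..<p}"
        then have "sqnorm n (x j) \<le> 1" using x by (simp add: BS_def)
        then show "0 \<le> nrm n (x j) \<and> nrm n (x j) \<le> 1" by (simp add: nrm_sqrt nrm_nonneg sqnorm_nonneg)
      qed
    qed
    have "\<bar>mlin p n T nt\<bar> \<le> B" by (rule sph) (simp add: nt1)
    then have "\<bar>mlin p n T x\<bar> \<le> 1 * B"
      unfolding eq abs_mult using pr by (intro mult_mono) auto
    then show ?thesis by simp
  qed
  have "Smax p n T \<le> B" by (rule Smax_least) (rule ball)
  then show ?thesis by (simp add: B_def algebra_simps)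
qed

lemma tensor_inner_bound:
  assumes n: "n \<ge> 1" and p: "p \<ge> 1"
    and F: "Fz p n T \<le> ennreal (exp (3 * real n / 2))"
    and th: "sqnorm n \<theta> = 1"
  shows "\<bar>tensor_inner p n \<theta> T\<bar> \<le> sqrt (real n) * (3 + 2 * real p * ln (40 * real p))"
proof -
  have "(\<lambda>_. \<theta>) \<in> BS p n" using th by (simp add: BS_def)
  then have "\<bar>mlin p n T (\<lambda>_. \<theta>)\<bar> \<le> Smax p n T" by (rule le_Smax)
  then show ?thesis using sup_bound[OF n p F] by (simp add: tensor_inner_mlin)
qed

lemma sqnorm_diff_inner:
  assumes "sqnorm n \<theta> = 1" "sqnorm n \<theta>0 = 1"
  shows "sqnorm n (\<lambda>i. \<theta> i - \<theta>0 i) = 2 - 2 * inner_n n \<theta> \<theta>0"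
proof -
  have "sqnorm n (\<lambda>i. \<theta> i - \<theta>0 i) = (\<Sum>i<n. (\<theta> i)^2 + (\<theta>0 i)^2 - 2 * (\<theta> i * \<theta>0 i))"
    unfolding sqnorm_def by (rule sum.cong) (auto simp: power2_diff)
  also have "\<dots> = sqnorm n \<theta> + sqnorm n \<theta>0 - 2 * inner_n n \<theta> \<theta>0"
    by (simp add: sqnorm_def inner_n_def sum.distrib sum_subtractf sum_distrib_left)
  finally show ?thesis using assms by simp
qed

lemma inner_cap:
  assumes "\<theta> \<in> cap n \<theta>0 \<delta>" "sqnorm n \<theta>0 = 1"
  shows "inner_n n \<theta> \<theta>0 \<ge> 1 - \<delta>^2 / 2"
proof -
  have "sqnorm n \<theta> = 1" "sqnorm n (\<lambda>i. \<theta> i - \<theta>0 i) \<le> \<delta>^2"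
    using assms by (auto simp: cap_def sphere_n_def)
  then show ?thesis using sqnorm_diff_inner[of n \<theta> \<theta>0] assms(2) by simp
qed

lemma bad_pow:
  assumes "\<theta> \<in> sphere_n n" "\<theta> \<notin> T_set p n \<theta>0 s" "0 \<le> s"
  shows "(inner_n n \<theta> \<theta>0)^p \<le> s^p"
proof (cases "even p")
  case True
  then have "\<bar>inner_n n \<theta> \<theta>0\<bar> \<le> s" using assms by (auto simp: T_set_def)
  then have "\<bar>inner_n n \<theta> \<theta>0\<bar>^p \<le> s^p" by (intro power_mono) auto
  then show ?thesis using True by (simp add: power_even_abs)
next
  case False
  then have le: "inner_n n \<theta> \<theta>0 \<le> s" using assms by (auto simp: T_set_def)
  show ?thesis
  proof (cases "inner_n n \<theta> \<theta>0 \<ge> 0")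
    case True then show ?thesis using le by (intro power_mono) auto
  next
    case neg: False
    then have "(inner_n n \<theta> \<theta>0)^p < 0" using False by (simp add: power_less_zero_eq)
    moreover have "0 \<le> s^p" using assms by simp
    ultimately show ?thesis by linarith
  qed
qed

lemma inner_meas: "(\<lambda>\<theta>. inner_n n \<theta> \<theta>0) \<in> borel_measurable (unif_sphere n)"
proof -
  note comp_meas_unif[measurable]
  show ?thesis unfolding inner_n_def by measurable
qed

lemma T_set_sets: "T_set p n \<theta>0 s \<in> sets (unif_sphere n)"
proof -
  note inner_meas[measurable]
  have a: "{\<theta> \<in> space (unif_sphere n). s < \<bar>inner_n n \<theta> \<theta>0\<bar>} \<in> sets (unif_sphere n)"
    by measurable
  have b: "{\<theta> \<in> space (unif_sphere n). s < inner_n n \<theta> \<theta>0} \<in> sets (unif_sphere n)"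
    by measurable
  show ?thesis using a b by (simp add: T_set_def space_unif)
qed

lemma post_bound:
  assumes n: "n \<ge> 1" and p: "p \<ge> 1" and lam: "lam \<ge> 0"
    and th0: "sqnorm n \<theta>0 = 1"
    and F: "Fz p n T \<le> ennreal (exp (3 * real n / 2))"
    and s: "0 \<le> s" and d: "0 < \<delta>" "\<delta> \<le> 1"
  defines "K \<equiv> 3 + 2 * real p * ln (40 * real p)"
  defines "\<eta> \<equiv> 1/2 * lam^2 * ((1 - \<delta>^2/2)^p - s^p) - lam * K - ln (20 / \<delta>)"
  shows "1 - exp (- real n * \<eta>) \<le> posterior p n lam (obs p n lam \<theta>0 T) (T_set p n \<theta>0 s)"
    and "posterior p n lam (obs p n lam \<theta>0 T) (T_set p n \<theta>0 s) \<le> 1"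
proof -
  let ?U = "unif_sphere n"
  let ?Y = "obs p n lam \<theta>0 T"
  define w where "w \<theta> = exp (1/2 * sqrt (real n) * lam * tensor_inner p n \<theta> ?Y)" for \<theta>
  define Tt where "Tt = T_set p n \<theta>0 s"
  define bad where "bad = sphere_n n - Tt"
  define C where "C = cap n \<theta>0 \<delta>"
  define r where "r = 1 - \<delta>^2 / 2"
  define SY where "SY = (\<Sum>xs\<in>tensor_idx p n. \<bar>?Y xs\<bar>)"
  interpret U: prob_space ?U by (rule prob_unif[OF n])
  have fmU: "finite_measure ?U" by unfold_locales
  note comp_meas_unif[measurable]
  have Tts[measurable]: "Tt \<in> sets ?U" unfolding Tt_def by (rule T_set_sets)
  have Ttsub: "Tt \<subseteq> sphere_n n" by (auto simp: Tt_def T_set_def)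
  have bads[measurable]: "bad \<in> sets ?U"
    unfolding bad_def using Tts sets.top[of ?U] by (simp add: space_unif sets.Diff)
  have Cs[measurable]: "C \<in> sets ?U" unfolding C_def by (rule cap_sets)
  have sq: "sqrt (real n) * sqrt (real n) = real n" by simp
  have w_eq: "w \<theta> = exp (1/2 * real n * lam^2 * (inner_n n \<theta> \<theta>0)^p + 1/2 * sqrt (real n) * lam * tensor_inner p n \<theta> T)" for \<theta>
  proof -
    have "1/2 * sqrt (real n) * lam * tensor_inner p n \<theta> ?Y
        = 1/2 * (sqrt (real n) * sqrt (real n)) * lam^2 * (inner_n n \<theta> \<theta>0)^p + 1/2 * sqrt (real n) * lam * tensor_inner p n \<theta> T"
      by (simp add: tensor_inner_obs algebra_simps power2_eq_square)
    then show ?thesis unfolding w_def sq by simp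
  qed
  have Gb: "\<bar>1/2 * sqrt (real n) * lam * tensor_inner p n \<theta> T\<bar> \<le> 1/2 * lam * K * real n" if "\<theta> \<in> sphere_n n" for \<theta>
  proof -
    have "\<bar>tensor_inner p n \<theta> T\<bar> \<le> sqrt (real n) * K"
      unfolding K_def by (rule tensor_inner_bound[OF n p F]) (use that in \<open>simp add: sphere_n_def\<close>)
    then have "1/2 * sqrt (real n) * lam * \<bar>tensor_inner p n \<theta> T\<bar> \<le> 1/2 * sqrt (real n) * lam * (sqrt (real n) * K)"
      using lam by (intro mult_left_mono) auto
    then show ?thesis using lam by (simp add: abs_mult algebra_simps)
  qed
  have w_up: "w \<theta> \<le> exp (1/2 * real n * lam^2 * (inner_n n \<theta> \<theta>0)^p + 1/2 * lam * K * real n)" if "\<theta> \<in> sphere_n n" for \<theta>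
    unfolding w_eq using Gb[OF that] by simp
  have w_low: "w \<theta> \<ge> exp (1/2 * real n * lam^2 * (inner_n n \<theta> \<theta>0)^p - 1/2 * lam * K * real n)" if "\<theta> \<in> sphere_n n" for \<theta>
    unfolding w_eq using Gb[OF that] by simp
  have wm[measurable]: "w \<in> borel_measurable ?U"
    unfolding w_def tensor_inner_def tpow_def by measurable
  have wbd: "\<bar>w \<theta>\<bar> \<le> exp (1/2 * sqrt (real n) * lam * SY)" if "\<theta> \<in> space ?U" for \<theta>
  proof -
    have "(\<lambda>_. \<theta>) \<in> BS p n" using that by (simp add: BS_def space_unif sphere_n_def)
    then have "\<bar>tensor_inner p n \<theta> ?Y\<bar> \<le> SY" unfolding tensor_inner_mlin SY_def by (rule mlin_bound_BS)
    then have "1/2 * sqrt (real n) * lam * tensor_inner p n \<theta> ?Y \<le> 1/2 * sqrt (real n) * lam * SY"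
      using lam by (intro mult_left_mono) auto
    then show ?thesis by (simp add: w_def)
  qed
  have iw: "integrable ?U w" by (rule bnd_int[OF fmU wm wbd])
  have iA: "integrable ?U (\<lambda>\<theta>. indicator A \<theta> * w \<theta>)" if "A \<in> sets ?U" for A
    using integrable_real_mult_indicator[OF that iw] by (simp add: mult.commute)
  define W where "W = (\<integral>\<theta>. w \<theta> \<partial>?U)"
  define Nb where "Nb = (\<integral>\<theta>. indicator bad \<theta> * w \<theta> \<partial>?U)"
  define Nt where "Nt = (\<integral>\<theta>. indicator Tt \<theta> * w \<theta> \<partial>?U)"
  have post: "posterior p n lam ?Y Tt = Nt / W"
    by (simp add: posterior_def Let_def Nt_def W_def w_def)
  have WN: "W = Nt + Nb"
  proof -
    have "W = (\<integral>\<theta>. indicator Tt \<theta> * w \<theta> + indicator bad \<theta> * w \<theta> \<partial>?U)"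
      unfolding W_def by (rule Bochner_Integration.integral_cong)
        (use Ttsub in \<open>auto simp: space_unif bad_def indicator_def\<close>)
    also have "\<dots> = Nt + Nb" unfolding Nt_def Nb_def by (rule Bochner_Integration.integral_add) (auto intro: iA)
    finally show ?thesis .
  qed
  have Nb_nn: "0 \<le> Nb" unfolding Nb_def by (rule Bochner_Integration.integral_nonneg) (simp add: w_def)
  define Eu where "Eu = exp (1/2 * real n * lam^2 * s^p + 1/2 * lam * K * real n)"
  define El where "El = exp (1/2 * real n * lam^2 * r^p - 1/2 * lam * K * real n)"
  have Nb_up: "Nb \<le> Eu"
  proof -
    have "Nb \<le> (\<integral>\<theta>. Eu * indicator bad \<theta> \<partial>?U)" unfolding Nb_def
    proof (rule integral_mono[OF iA[OF bads]])
      show "integrable ?U (\<lambda>\<theta>. Eu * indicator bad \<theta>)" using bads by (simp add: U.emeasure_eq_measure)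
      fix \<theta> show "indicator bad \<theta> * w \<theta> \<le> Eu * indicator bad \<theta>"
      proof (cases "\<theta> \<in> bad")
        case True
        then have th: "\<theta> \<in> sphere_n n" "\<theta> \<notin> Tt" by (auto simp: bad_def)
        have "(inner_n n \<theta> \<theta>0)^p \<le> s^p" by (rule bad_pow[OF th(1) th(2)[unfolded Tt_def] s])
        then have "1/2 * real n * lam^2 * (inner_n n \<theta> \<theta>0)^p \<le> 1/2 * real n * lam^2 * s^p"
          by (intro mult_left_mono) auto
        then have "exp (1/2 * real n * lam^2 * (inner_n n \<theta> \<theta>0)^p + 1/2 * lam * K * real n) \<le> Eu"
          unfolding Eu_def by simp
        with w_up[OF th(1)] have "w \<theta> \<le> Eu" by (rule order_trans)
        then show ?thesis using True by simp
      qed simp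
    qed
    also have "\<dots> = Eu * measure ?U bad" using bads by simp
    also have "\<dots> \<le> Eu * 1" by (intro mult_left_mono) (auto simp: Eu_def)
    finally show ?thesis by simp
  qed
  have W_low: "W \<ge> El * (\<delta> / 20)^n"
  proof -
    have "(\<integral>\<theta>. El * indicator C \<theta> \<partial>?U) \<le> W" unfolding W_def
    proof (rule integral_mono[OF _ iw])
      show "integrable ?U (\<lambda>\<theta>. El * indicator C \<theta>)" using Cs by (simp add: U.emeasure_eq_measure)
      fix \<theta> assume th: "\<theta> \<in> space ?U"
      show "El * indicator C \<theta> \<le> w \<theta>"
      proof (cases "\<theta> \<in> C")
        case True
        have "\<delta>^2 \<le> 1" using d by (simp add: power_le_one)
        then have r0: "0 \<le> r" by (simp add: r_def)
        have "r \<le> inner_n n \<theta> \<theta>0" using inner_cap[OF True[unfolded C_def] th0] by (simp add: r_def)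
        then have "r^p \<le> (inner_n n \<theta> \<theta>0)^p" using r0 by (intro power_mono) auto
        then have "1/2 * real n * lam^2 * r^p \<le> 1/2 * real n * lam^2 * (inner_n n \<theta> \<theta>0)^p"
          by (intro mult_left_mono) auto
        then have "El \<le> exp (1/2 * real n * lam^2 * (inner_n n \<theta> \<theta>0)^p - 1/2 * lam * K * real n)"
          unfolding El_def by simp
        also have "\<dots> \<le> w \<theta>" using w_low th by (simp add: space_unif)
        finally have "El \<le> w \<theta>" .
        then show ?thesis using True by simp
      qed (simp add: w_def)
    qed
    moreover have "(\<integral>\<theta>. El * indicator C \<theta> \<partial>?U) = El * measure ?U C" using Cs by simp
    moreover have "measure ?U C \<ge> (\<delta> / 20)^n"
      using cap_lower[OF n th0 d] by (simp add: C_def U.emeasure_eq_measure)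
    moreover have "El * (\<delta> / 20)^n \<le> El * measure ?U C"
      using calculation(3) by (intro mult_left_mono) (auto simp: El_def)
    ultimately show ?thesis by linarith
  qed
  have "El * (\<delta> / 20)^n > 0" using d by (simp add: El_def)
  then have Wpos: "W > 0" using W_low by linarith
  have ratio: "Nb / W \<le> exp (- real n * \<eta>)"
  proof -
    have dp: "(\<delta> / 20)^n > 0" using d by simp
    have "Nb / W \<le> Eu / (El * (\<delta> / 20)^n)"
      using Nb_up W_low Wpos Nb_nn dp by (intro frac_le) (auto simp: El_def)
    also have "(\<delta> / 20)^n = exp (real n * ln (\<delta> / 20))" using d by (subst exp_of_nat_mult) simp
    also have "Eu / (El * exp (real n * ln (\<delta> / 20))) = exp (- real n * \<eta>)"
    proof -
      define a where "a = 1/2 * real n * lam^2 * s^p + 1/2 * lam * K * real n"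
      define b where "b = 1/2 * real n * lam^2 * r^p - 1/2 * lam * K * real n"
      define X where "X = real n * ln (\<delta> / 20)"
      have l: "ln (20 / \<delta>) = - ln (\<delta> / 20)" using d by (simp add: ln_div)
      have "Eu / (El * exp X) = exp (a - (b + X))"
        unfolding Eu_def El_def a_def[symmetric] b_def[symmetric] exp_diff exp_add ..
      also have "a - (b + X) = - real n * \<eta>"
        unfolding a_def b_def X_def \<eta>_def l r_def by (simp add: algebra_simps)
      finally show ?thesis by (simp add: X_def)
    qed
    finally show ?thesis .
  qed
  have pe: "posterior p n lam ?Y Tt = 1 - Nb / W"
    unfolding post using Wpos WN by (simp add: field_simps)
  show "1 - exp (- real n * \<eta>) \<le> posterior p n lam ?Y (T_set p n \<theta>0 s)"
    using pe ratio by (simp add: Tt_def)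
  show "posterior p n lam ?Y (T_set p n \<theta>0 s) \<le> 1"
    using pe Nb_nn Wpos by (simp add: Tt_def)
qed

lemma eta_pos:
  fixes p :: nat and lam K A :: real
  assumes p: "p \<ge> 1" and K: "K \<ge> 0" and A: "A = K + 20 + real p"
    and lam: "lam \<ge> 64 * A^2 + 1"
  shows "1/2 * lam^2 * ((1 - (1 / sqrt (real p * (lam + 1)))^2/2)^p - (1 - 1 / sqrt (lam + 1))^p)
           - lam * K - ln (20 / (1 / sqrt (real p * (lam + 1)))) > 0"
proof -
  define L where "L = lam"
  define q where "q = sqrt (L + 1)"
  define r where "r = sqrt L"
  define d where "d = 1 / sqrt (real p * (L + 1))"
  have A0: "A > 0" using A K p by simp
  have "0 \<le> 64 * A^2" by simp
  then have L1: "L \<ge> 1" using lam unfolding L_def by linarith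
  have q1: "q \<ge> 1" using L1 by (simp add: q_def)
  have qsq: "q^2 = L + 1" using L1 by (simp add: q_def)
  have rsq: "r^2 = L" using L1 by (simp add: r_def)
  have r0: "r > 0" using L1 by (simp add: r_def)
  have r8: "r > 8 * A"
  proof -
    have "(8 * A)^2 < L" using lam by (simp add: L_def power_mult_distrib)
    then have "sqrt ((8 * A)^2) < sqrt L" by (rule real_sqrt_less_mono)
    then show ?thesis using A0 unfolding real_sqrt_abs r_def by simp
  qed
  have q2r: "q \<le> 2 * r"
  proof -
    have "sqrt (L + 1) \<le> sqrt (4 * L)" using L1 by (intro real_sqrt_le_mono) simp
    also have "sqrt (4 * L) = 2 * r" by (simp add: r_def real_sqrt_mult)
    finally show ?thesis by (simp add: q_def)
  qed
  define s where "s = 1 - 1 / q"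
  have s01: "0 \<le> s" "s \<le> 1" using q1 by (auto simp: s_def)
  have h2: "s^p \<le> s" using power_decreasing[of 1 p s] s01 p by simp
  have dsq: "d^2 = 1 / (real p * (L + 1))" using L1 p by (simp add: d_def power_divide)
  have h3: "(1 - d^2/2)^p \<ge> 1 - 1 / (2 * (L + 1))"
  proof -
    have pL: "1 * 1 \<le> real p * (L + 1)" using L1 p by (intro mult_mono) auto
    have "d^2 \<le> 1" unfolding dsq using pL by (intro divide_le_eq_1_pos[THEN iffD2]) auto
    then have "-1 \<le> - (d^2 / 2)" by simp
    then have "1 + real p * (- (d^2/2)) \<le> (1 + - (d^2/2))^p" by (rule Bernoulli_inequality)
    moreover have "real p * (- (d^2/2)) = - (1 / (2 * (L + 1)))"
    proof -
      have pp: "real p > 0" "L + 1 > 0" using p L1 by auto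
      have "real p * (d^2/2) = real p / (2 * (real p * (L + 1)))" unfolding dsq by simp
      also have "\<dots> = 1 / (2 * (L + 1))" using pp by (simp add: divide_simps)
      finally have e: "real p * (d^2/2) = 1 / (2 * (L + 1))" .
      show ?thesis by (simp only: mult_minus_right e)
    qed
    ultimately show ?thesis by (simp only: diff_conv_add_uminus)
  qed
  have h4: "(1 - d^2/2)^p - s^p \<ge> 1 / (2 * q)"
  proof -
    have "q \<le> q^2" using q1 by (simp add: power2_eq_square)
    then have qL: "q \<le> L + 1" using qsq by simp
    have e1: "1 / (2 * (L + 1)) \<le> 1 / (2 * q)" by (rule frac_le) (use q1 qL in auto)
    have e2: "1 / q = 2 * (1 / (2 * q))" using q1 by simp
    have "(1 - d^2/2)^p - s^p \<ge> (1 - 1 / (2 * (L + 1))) - (1 - 1 / q)"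
      using h2 h3 unfolding s_def by linarith
    then show ?thesis using e1 e2 by linarith
  qed
  have h5: "1/2 * L^2 * ((1 - d^2/2)^p - s^p) \<ge> L * r / 8"
  proof -
    have "1/2 * L^2 * ((1 - d^2/2)^p - s^p) \<ge> 1/2 * L^2 * (1 / (2 * q))"
      using h4 by (intro mult_left_mono) auto
    moreover have "1 / (2 * q) \<ge> 1 / (4 * r)" using q2r q1 r0 by (simp add: divide_simps)
    then have "1/2 * L^2 * (1 / (2 * q)) \<ge> 1/2 * L^2 * (1 / (4 * r))" by (intro mult_left_mono) auto
    moreover have "1/2 * L^2 * (1 / (4 * r)) = L * r / 8"
      using r0 rsq by (simp add: field_simps power2_eq_square)
    ultimately show ?thesis by linarith
  qed
  have h6: "L * r / 8 > L * A" using r8 L1 by (simp add: field_simps)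
  have h7: "ln (20 / d) \<le> 20 * L + real p * L"
  proof -
    have "20 / d = 20 * sqrt (real p * (L + 1))" by (simp add: d_def)
    then have "ln (20 / d) = ln 20 + ln (real p * (L + 1)) / 2"
      using p L1 by (simp add: ln_mult ln_sqrt)
    moreover have "ln (20::real) \<le> 20 * L"
      using ln_le_minus_one[of 20] L1 by simp
    moreover have "ln (real p * (L + 1)) \<le> 2 * real p * L"
    proof -
      have "ln (real p * (L + 1)) \<le> real p * (L + 1) - 1" using p L1 by (intro ln_le_minus_one) simp
      also have "\<dots> \<le> 2 * real p * L"
      proof -
        have "real p * 1 \<le> real p * L" using L1 by (intro mult_left_mono) auto
        moreover have "real p * (L + 1) = real p * L + real p" by (simp add: algebra_simps)
        ultimately show ?thesis by linarith
      qed
      finally show ?thesis .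
    qed
    ultimately show ?thesis by simp
  qed
  have LA: "L * A = L * K + 20 * L + real p * L" by (simp add: A algebra_simps)
  have "1/2 * L^2 * ((1 - d^2/2)^p - s^p) - L * K - ln (20 / d) > 0"
    using h5 h6 h7 LA by linarith
  then show ?thesis unfolding L_def d_def s_def q_def .
qed

theorem corollary2p4:
  fixes p :: nat
  assumes "p \<ge> 3"
  shows "\<exists>lam0 > 0. \<exists>s :: real \<Rightarrow> real.
           (\<forall>lam\<ge>0. 0 \<le> s lam \<and> s lam < 1) \<and> (s \<longlongrightarrow> 1) at_top \<and>
           (\<forall>lam \<ge> lam0. \<forall>(\<theta>0 :: nat \<Rightarrow> nat \<Rightarrow> real) (M :: 'a measure)
                (Z :: nat \<Rightarrow> 'a \<Rightarrow> nat list \<Rightarrow> real).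
              prob_space M \<longrightarrow>
              (\<forall>n\<ge>1. sqnorm n (\<theta>0 n) = 1) \<longrightarrow>
              (\<forall>n\<ge>1. prob_space.indep_vars M (\<lambda>_. borel) (\<lambda>xs \<omega>. Z n \<omega> xs) (tensor_idx p n)) \<longrightarrow>
              (\<forall>n\<ge>1. \<forall>xs\<in>tensor_idx p n. distributed M lborel (\<lambda>\<omega>. Z n \<omega> xs) std_normal_density) \<longrightarrow>
              (AE \<omega> in M. (\<lambda>n. posterior p n lam (obs p n lam (\<theta>0 n) (Z n \<omega>))
                                   (T_set p n (\<theta>0 n) (s lam))) \<longlonglongrightarrow> 1))"
proof -
  have p1: "p \<ge> 1" using assms by simp
  define K where "K = 3 + 2 * real p * ln (40 * real p)"
  define A where "A = K + 20 + real p"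
  define lam0 where "lam0 = 64 * A^2 + 1"
  define s where "s = (\<lambda>lam::real. 1 - 1 / sqrt (lam + 1))"
  define dl where "dl = (\<lambda>lam::real. 1 / sqrt (real p * (lam + 1)))"
  have K0: "K \<ge> 0" using p1 by (simp add: K_def)
  have lam0pos: "lam0 > 0" by (simp add: lam0_def add_nonneg_pos)
  have srange: "\<forall>lam\<ge>0. 0 \<le> s lam \<and> s lam < 1"
  proof (intro allI impI)
    fix lam :: real assume "lam \<ge> 0"
    then have "sqrt (lam + 1) \<ge> 1" by simp
    then show "0 \<le> s lam \<and> s lam < 1" by (simp add: s_def divide_simps)
  qed
  have slim: "(s \<longlongrightarrow> 1) at_top" unfolding s_def by real_asymp
  have main: "\<forall>lam \<ge> lam0. \<forall>(\<theta>0 :: nat \<Rightarrow> nat \<Rightarrow> real) (M :: 'a measure)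
                (Z :: nat \<Rightarrow> 'a \<Rightarrow> nat list \<Rightarrow> real).
              prob_space M \<longrightarrow>
              (\<forall>n\<ge>1. sqnorm n (\<theta>0 n) = 1) \<longrightarrow>
              (\<forall>n\<ge>1. prob_space.indep_vars M (\<lambda>_. borel) (\<lambda>xs \<omega>. Z n \<omega> xs) (tensor_idx p n)) \<longrightarrow>
              (\<forall>n\<ge>1. \<forall>xs\<in>tensor_idx p n. distributed M lborel (\<lambda>\<omega>. Z n \<omega> xs) std_normal_density) \<longrightarrow>
              (AE \<omega> in M. (\<lambda>n. posterior p n lam (obs p n lam (\<theta>0 n) (Z n \<omega>))
                                   (T_set p n (\<theta>0 n) (s lam))) \<longlonglongrightarrow> 1)"
  proof (intro allI impI)
    fix lam :: real and \<theta>0 :: "nat \<Rightarrow> nat \<Rightarrow> real" and M :: "'a measure" and Z :: "nat \<Rightarrow> 'a \<Rightarrow> nat list \<Rightarrow> real"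
    assume lam: "lam \<ge> lam0" and M: "prob_space M"
      and th0: "\<forall>n\<ge>1. sqnorm n (\<theta>0 n) = 1"
      and ind: "\<forall>n\<ge>1. prob_space.indep_vars M (\<lambda>_. borel) (\<lambda>xs \<omega>. Z n \<omega> xs) (tensor_idx p n)"
      and dist: "\<forall>n\<ge>1. \<forall>xs\<in>tensor_idx p n. distributed M lborel (\<lambda>\<omega>. Z n \<omega> xs) std_normal_density"
    define eta where "eta = 1/2 * lam^2 * ((1 - (dl lam)^2/2)^p - (s lam)^p) - lam * K - ln (20 / dl lam)"
    have "0 \<le> 64 * A^2" by simp
    then have lam1: "lam \<ge> 1" using lam unfolding lam0_def by linarith
    have eta: "eta > 0"
      unfolding eta_def dl_def s_def
      by (rule eta_pos[OF p1 K0 A_def]) (use lam in \<open>simp add: lam0_def\<close>)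
    have "1 * 1 \<le> real p * (lam + 1)" using lam1 p1 by (intro mult_mono) auto
    then have dl: "0 < dl lam" "dl lam \<le> 1" using lam1 p1 by (auto simp: dl_def)
    have s0: "0 \<le> s lam" using srange lam1 by simp
    have AE: "AE \<omega> in M. eventually (\<lambda>n. Fz p n (Z n \<omega>) \<le> ennreal (exp (3 * real n / 2))) sequentially"
      by (rule AE_Fz[OF M ind dist])
    show "AE \<omega> in M. (\<lambda>n. posterior p n lam (obs p n lam (\<theta>0 n) (Z n \<omega>)) (T_set p n (\<theta>0 n) (s lam))) \<longlonglongrightarrow> 1"
      using AE
    proof (rule AE_mp, intro AE_I2 impI)
      fix \<omega> assume ev: "eventually (\<lambda>n. Fz p n (Z n \<omega>) \<le> ennreal (exp (3 * real n / 2))) sequentially"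
      let ?post = "\<lambda>n. posterior p n lam (obs p n lam (\<theta>0 n) (Z n \<omega>)) (T_set p n (\<theta>0 n) (s lam))"
      have bounds: "eventually (\<lambda>n. 1 - exp (- real n * eta) \<le> ?post n \<and> ?post n \<le> 1) sequentially"
        using ev eventually_ge_at_top[of "1::nat"]
      proof eventually_elim
        case (elim n)
        have n: "n \<ge> 1" using elim by simp
        note pb = post_bound[OF n p1 _ th0[rule_format, OF n] elim(1) s0 dl, of lam]
        show ?case using pb lam1 unfolding eta_def K_def by simp
      qed
      have lim1: "(\<lambda>n. 1 - exp (- real n * eta)) \<longlonglongrightarrow> 1"
      proof -
        have "(\<lambda>n. exp (- eta) ^ n) \<longlonglongrightarrow> 0"
          by (rule LIMSEQ_power_zero) (use eta in simp)
        moreover have "(\<lambda>n. exp (- eta) ^ n) = (\<lambda>n. exp (- real n * eta))"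
          by (simp add: exp_of_nat_mult[symmetric])
        ultimately have "(\<lambda>n. exp (- real n * eta)) \<longlonglongrightarrow> 0" by simp
        then show ?thesis using tendsto_diff[OF tendsto_const[of 1]] by fastforce
      qed
      show "?post \<longlonglongrightarrow> 1"
        by (rule tendsto_sandwich[OF _ _ lim1 tendsto_const])
           (use bounds in \<open>auto elim: eventually_mono\<close>)
    qed
  qed
  show ?thesis using lam0pos srange slim main by blast
qed

end
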